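(* Let $\pi$ be a standard permutation on $\mathcal{A}$ and assume $M_\pi\in\mathcal{H}(m_1,\dots,m_n)$ with $m_1\ge2$ and $m_i\ge1$ for every $2\le i\le n$. Let $m_{1,1},m_{1,2}\ge1$ be any integers with $m_{1,1}+m_{1,2}=m_1$. Then there exists an irreducible permutation $\pi'$ which is a simple extension of $\pi$ and such that $M_{\pi'}\in\mathcal{H}(m_{1,1},m_{1,2},m_2,\dots,m_n)$.
   Context: A permutation on a finite alphabet $\mathcal{A}$ ($d=|\mathcal{A}|$) is a pair $\pi=(\pi_{\mathrm t},\pi_{\mathrm b})$ of bijections $\mathcal{A}\to\{1,\dots,d\}$, displayed with top row $\alpha_{\mathrm t,1}\cdots\alpha_{\mathrm t,d}$ and bottom row $\alpha_{\mathrm b,1}\cdots\alpha_{\mathrm b,d}$, $\alpha_{\varepsilon,j}=\pi_\varepsilon^{-1}(j)$; it is irreducible if $\pi_{\mathrm t}^{-1}(\{1,\dots,j\})\ne\pi_{\mathrm b}^{-1}(\{1,\dots,j\})$ for $1\le j<d$. $\pi$ is standard if $\pi_{\mathrm b}(\alpha_{\mathrm t,d})=1$ and $\pi_{\mathrm b}(\alpha_{\mathrm t,1})=d$. Given a letter $\alpha'\notin\mathcal{A}$ and $\beta,\beta'\in\mathcal{A}$ with $(\beta,\beta')\ne(\alpha_{\mathrm t,1},\alpha_{\mathrm b,1})$, the permutation on $\mathcal{A}\cup\{\alpha'\}$ obtained by inserting $\alpha'$ just before $\beta$ in the top row and just before $\beta'$ in the bottom row is called a simple extension of $\pi$. $M_\pi$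 is the translation surface obtained by suspension: the polygon $P_\pi$ whose top boundary consists of the vectors $1+i(\pi_{\mathrm b}(\alpha)-\pi_{\mathrm t}(\alpha))$ in the order of $\pi_{\mathrm t}$ and bottom boundary of the same vectors in the order of $\pi_{\mathrm b}$, both from $0$ to $d$, with sides labelled by the same letter identified by translation. $M_\pi\in\mathcal{H}(m_1,\dots,m_n)$ means that the distinct points of $M_\pi$ coming from vertices of $P_\pi$ (other than possible removable points of angle $2\pi$ — here all $m_i\ge1$) are cone points of total angles $2\pi(m_1+1),\dots,2\pi(m_n+1)$. *)

theory Defs
  imports "HOL-Analysis.Analysis"
begin

text \<open>A permutation on a finite alphabet A is a pair (pt, pb) of bijections A -> {1..d},
  d = card A.  Values of pt, pb outside A are irrelevant.\<close>

definition is_perm :: "'a set \<Rightarrow> ('a \<Rightarrow> nat) \<Rightarrow> ('a \<Rightarrow> nat) \<Rightarrow> bool" where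
  "is_perm A pt pb \<longleftrightarrow> finite A \<and> bij_betw pt A {1..card A} \<and> bij_betw pb A {1..card A}"

definition irreducible_perm :: "'a set \<Rightarrow> ('a \<Rightarrow> nat) \<Rightarrow> ('a \<Rightarrow> nat) \<Rightarrow> bool" where
  "irreducible_perm A pt pb \<longleftrightarrow> is_perm A pt pb \<and>
     (\<forall>j. 1 \<le> j \<and> j < card A \<longrightarrow> {a \<in> A. pt a \<le> j} \<noteq> {a \<in> A. pb a \<le> j})"

definition standard_perm :: "'a set \<Rightarrow> ('a \<Rightarrow> nat) \<Rightarrow> ('a \<Rightarrow> nat) \<Rightarrow> bool" where
  "standard_perm A pt pb \<longleftrightarrow> is_perm A pt pb \<and>
     (\<exists>a\<in>A. pt a = card A \<and> pb a = 1) \<and> (\<exists>b\<in>A. pt b = 1 \<and> pb b = card A)"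

text \<open>(pt', pb') on A \<union> {a'} is obtained from (pt, pb) on A by inserting a' just before
  b in the top row and just before b' in the bottom row.\<close>
definition insert_before :: "('a \<Rightarrow> nat) \<Rightarrow> 'a \<Rightarrow> 'a \<Rightarrow> 'a \<Rightarrow> nat" where
  "insert_before p a' b x = (if x = a' then p b else if p x \<ge> p b then p x + 1 else p x)"

definition simple_extension ::
  "'a set \<Rightarrow> ('a \<Rightarrow> nat) \<Rightarrow> ('a \<Rightarrow> nat) \<Rightarrow> 'a \<Rightarrow> ('a \<Rightarrow> nat) \<Rightarrow> ('a \<Rightarrow> nat) \<Rightarrow> bool" where
  "simple_extension A pt pb a' pt' pb' \<longleftrightarrow> a' \<notin> A \<and>
     (\<exists>b\<in>A. \<exists>b'\<in>A. \<not> (pt b = 1 \<and> pb b' = 1) \<and>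
        (\<forall>x \<in> insert a' A. pt' x = insert_before pt a' b x \<and> pb' x = insert_before pb a' b' x))"

definition side_vec :: "('a \<Rightarrow> nat) \<Rightarrow> ('a \<Rightarrow> nat) \<Rightarrow> 'a \<Rightarrow> complex" where
  "side_vec pt pb a = Complex 1 (real (pb a) - real (pt a))"

definition top_vertex :: "'a set \<Rightarrow> ('a \<Rightarrow> nat) \<Rightarrow> ('a \<Rightarrow> nat) \<Rightarrow> nat \<Rightarrow> complex" where
  "top_vertex A pt pb j = (\<Sum>a\<in>{a\<in>A. pt a \<le> j}. side_vec pt pb a)"

definition bot_vertex :: "'a set \<Rightarrow> ('a \<Rightarrow> nat) \<Rightarrow> ('a \<Rightarrow> nat) \<Rightarrow> nat \<Rightarrow> complex" where
  "bot_vertex A pt pb j = (\<Sum>a\<in>{a\<in>A. pb a \<le> j}. side_vec pt pb a)"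

text \<open>Corners of P_pi, indexed by k < 2d in counterclockwise order:
  k = 0..d are B_0, ..., B_d (B_0 = T_0 = 0, B_d = T_d = d), k = d+1..2d-1 are T_{d-1}, ..., T_1.\<close>
definition corner_pos :: "'a set \<Rightarrow> ('a \<Rightarrow> nat) \<Rightarrow> ('a \<Rightarrow> nat) \<Rightarrow> nat \<Rightarrow> complex" where
  "corner_pos A pt pb k = (if k \<le> card A then bot_vertex A pt pb k
                            else top_vertex A pt pb (2 * card A - k))"

text \<open>Interior angle of P_pi at corner k (polygon traversed counterclockwise), in [0, 2pi).\<close>
definition corner_angle :: "'a set \<Rightarrow> ('a \<Rightarrow> nat) \<Rightarrow> ('a \<Rightarrow> nat) \<Rightarrow> nat \<Rightarrow> real" where
  "corner_angle A pt pb k =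
     (let d = card A; v = corner_pos A pt pb k;
          u = corner_pos A pt pb ((k + 2 * d - 1) mod (2 * d));
          w = corner_pos A pt pb ((k + 1) mod (2 * d))
      in Arg2pi ((u - v) / (w - v)))"

definition top_corner :: "'a set \<Rightarrow> nat \<Rightarrow> nat" where
  "top_corner A j = (if j = 0 then 0 else 2 * card A - j)"

definition bot_corner :: "'a set \<Rightarrow> nat \<Rightarrow> nat" where
  "bot_corner A j = j"

text \<open>Gluing side a of the top with side a of the bottom identifies their endpoints.\<close>
definition glue_rel :: "'a set \<Rightarrow> ('a \<Rightarrow> nat) \<Rightarrow> ('a \<Rightarrow> nat) \<Rightarrow> (nat \<times> nat) set" where
  "glue_rel A pt pb =
     (\<Union>a\<in>A. {(top_corner A (pt a - 1), bot_corner A (pb a - 1)),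
              (top_corner A (pt a), bot_corner A (pb a))})"

definition vertex_equiv :: "'a set \<Rightarrow> ('a \<Rightarrow> nat) \<Rightarrow> ('a \<Rightarrow> nat) \<Rightarrow> (nat \<times> nat) set" where
  "vertex_equiv A pt pb = (glue_rel A pt pb \<union> (glue_rel A pt pb)\<inverse>)\<^sup>*"

text \<open>The points of M_pi coming from vertices of P_pi = classes of corners.\<close>
definition vertex_classes :: "'a set \<Rightarrow> ('a \<Rightarrow> nat) \<Rightarrow> ('a \<Rightarrow> nat) \<Rightarrow> nat set set" where
  "vertex_classes A pt pb = {vertex_equiv A pt pb `` {k} | k. k < 2 * card A}"

definition class_angle :: "'a set \<Rightarrow> ('a \<Rightarrow> nat) \<Rightarrow> ('a \<Rightarrow> nat) \<Rightarrow> nat set \<Rightarrow> real" where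
  "class_angle A pt pb C = (\<Sum>k\<in>C. corner_angle A pt pb k)"

text \<open>M_pi \<in> H(ms): the non-removable vertex points (angle \<noteq> 2pi) are in bijection with the
  entries of ms, with cone angles 2pi(m_i+1).\<close>
definition in_stratum :: "'a set \<Rightarrow> ('a \<Rightarrow> nat) \<Rightarrow> ('a \<Rightarrow> nat) \<Rightarrow> nat list \<Rightarrow> bool" where
  "in_stratum A pt pb ms \<longleftrightarrow>
     (\<exists>f. bij_betw f {C \<in> vertex_classes A pt pb. class_angle A pt pb C \<noteq> 2 * pi} {..<length ms} \<and>
          (\<forall>C \<in> {C \<in> vertex_classes A pt pb. class_angle A pt pb C \<noteq> 2 * pi}.
              class_angle A pt pb C = 2 * pi * (real (ms ! f C) + 1)))"

end

theory Submission
  imports Defs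
begin

lemma funpow_in: "f ` S \<subseteq> S \<Longrightarrow> x \<in> S \<Longrightarrow> (f ^^ n) x \<in> S"
  by (induction n) auto

lemma funpow_inj: "inj_on f S \<Longrightarrow> f ` S \<subseteq> S \<Longrightarrow> x \<in> S \<Longrightarrow> y \<in> S \<Longrightarrow> (f ^^ n) x = (f ^^ n) y \<Longrightarrow> x = y"
proof (induction n arbitrary: x y)
  case (Suc n)
  have "(f ^^ n) x \<in> S" "(f ^^ n) y \<in> S" using funpow_in Suc.prems by metis+
  moreover have "f ((f ^^ n) x) = f ((f ^^ n) y)" using Suc.prems(5) by simp
  ultimately have "(f ^^ n) x = (f ^^ n) y"
    using Suc.prems(1) by (simp add: inj_on_def)
  then show ?case using Suc by blast
qed simp

lemma funpow_mult_period: "(f ^^ m) x = x \<Longrightarrow> (f ^^ (m * i)) x = x"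
proof (induction i)
  case (Suc i)
  have "(f ^^ (m * Suc i)) x = (f ^^ (m * i)) ((f ^^ m) x)"
    by (metis funpow_add comp_apply mult_Suc_right add.commute)
  then show ?case using Suc by simp
qed simp

definition orb :: "(nat \<Rightarrow> nat) \<Rightarrow> nat \<Rightarrow> nat set" where
  "orb f x = range (\<lambda>n. (f ^^ n) x)"

lemma fpa: "(f ^^ (m + n)) x = (f ^^ m) ((f ^^ n) x)"
  by (simp add: funpow_add)

lemma period_exists:
  assumes "finite S" "inj_on f S" "f ` S \<subseteq> S" "x \<in> S"
  shows "\<exists>m>0. (f ^^ m) x = x"
proof -
  have "\<not> inj_on (\<lambda>n. (f ^^ n) x) {..card S}"
  proof
    assume inj: "inj_on (\<lambda>n. (f ^^ n) x) {..card S}"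
    have "(\<lambda>n. (f ^^ n) x) ` {..card S} \<subseteq> S" using funpow_in[OF assms(3,4)] by auto
    from card_mono[OF assms(1) this] card_image[OF inj] show False by simp
  qed
  then obtain i j where ij: "i \<le> card S" "j \<le> card S" "i \<noteq> j" "(f ^^ i) x = (f ^^ j) x"
    unfolding inj_on_def by auto
  {
    fix i j assume "i < j" "(f ^^ i) x = (f ^^ j) x"
    then have "(f ^^ i) x = (f ^^ i) ((f ^^ (j - i)) x)"
      using fpa[of i "j - i" f x] by simp
    then have "x = (f ^^ (j - i)) x"
      using funpow_inj[OF assms(2,3)] funpow_in[OF assms(3)] assms(4) by blast
    then have "\<exists>m>0. (f ^^ m) x = x" using \<open>i < j\<close> by (intro exI[of _ "j - i"]) auto
  }
  with ij show ?thesis by (metis linorder_neq_iff)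
qed

lemma orb_periodic:
  assumes "(f ^^ m) x = x" "m > 0"
  shows "orb f x = (\<lambda>n. (f ^^ n) x) ` {..<m}"
proof -
  { fix n
    have e: "n mod m + m * (n div m) = n" by simp
    have "(f ^^ n) x = (f ^^ (n mod m)) ((f ^^ (m * (n div m))) x)"
      using fpa[of "n mod m" "m * (n div m)" f x] unfolding e .
    also have "\<dots> = (f ^^ (n mod m)) x" using funpow_mult_period[OF assms(1)] by simp
    finally have "(f ^^ n) x \<in> (\<lambda>n. (f ^^ n) x) ` {..<m}" using assms(2) by auto }
  then show ?thesis unfolding orb_def by auto
qed

lemma orb_self: "x \<in> orb f x"
  unfolding orb_def by (rule range_eqI[of _ _ 0]) simp

lemma orb_funpow: "(f ^^ n) x \<in> orb f x"
  unfolding orb_def by auto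

lemma orb_step: "y \<in> orb f x \<Longrightarrow> f y \<in> orb f x"
proof -
  assume "y \<in> orb f x"
  then obtain n where "y = (f ^^ n) x" unfolding orb_def by auto
  then have "f y = (f ^^ Suc n) x" by simp
  then show ?thesis unfolding orb_def by blast
qed

lemma orb_same:
  assumes "(f ^^ m) x = x" "m > 0" "y \<in> orb f x"
  shows "orb f y = orb f x"
proof -
  obtain i where y: "y = (f ^^ i) x" using assms(3) unfolding orb_def by auto
  have "orb f y \<subseteq> orb f x"
  proof
    fix z assume "z \<in> orb f y"
    then obtain j where "z = (f ^^ j) y" unfolding orb_def by auto
    then have "z = (f ^^ (j + i)) x" using fpa[of j i f x] unfolding y by simp
    then show "z \<in> orb f x" using orb_funpow by metis
  qed
  moreover have "orb f x \<subseteq> orb f y"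
  proof
    fix z assume "z \<in> orb f x"
    then obtain j where z: "z = (f ^^ j) x" unfolding orb_def by auto
    have "m * i \<ge> i" using assms(2) by simp
    have "(f ^^ (j + m * i - i)) y = (f ^^ (j + m * i - i + i)) x"
      unfolding y by (rule fpa[symmetric])
    also have "j + m * i - i + i = j + m * i" using \<open>m * i \<ge> i\<close> by linarith
    also have "(f ^^ (j + m * i)) x = z" unfolding z using funpow_mult_period[OF assms(1), of i]
      fpa[of j "m * i" f x] by simp
    finally show "z \<in> orb f y" by (metis orb_funpow)
  qed
  ultimately show ?thesis by blast
qed

lemma orb_back:
  assumes "finite S" "inj_on f S" "f ` S \<subseteq> S" "x \<in> S" "i \<in> S" "f i \<in> orb f x"
  shows "i \<in> orb f x"
proof -
  obtain m where m: "m > 0" "(f ^^ m) x = x" using period_exists[OF assms(1-4)] by blast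
  obtain n where n: "f i = (f ^^ n) x" using assms(6) unfolding orb_def by auto
  have e1: "(f ^^ (n + m)) x = (f ^^ n) x" using fpa[of n m f x] unfolding m(2) .
  have e2: "n + m = Suc (n + m - 1)" using m(1) by simp
  have e3: "(f ^^ (n + m)) x = f ((f ^^ (n + m - 1)) x)" using funpow.simps(2)[of "n + m - 1" f] e2 by (metis comp_apply)
  have "f i = f ((f ^^ (n + m - 1)) x)" using n e1 e3 by metis
  moreover have "(f ^^ (n + m - 1)) x \<in> S" using funpow_in[OF assms(3,4)] .
  ultimately have "i = (f ^^ (n + m - 1)) x"
    using assms(2,5) unfolding inj_on_def by blast
  then show ?thesis by (simp add: orb_funpow)
qed

lemma orb_subset: "f ` S \<subseteq> S \<Longrightarrow> x \<in> S \<Longrightarrow> orb f x \<subseteq> S"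
  unfolding orb_def using funpow_in[of f S x] by auto


definition lamf :: "'a set \<Rightarrow> ('a \<Rightarrow> nat) \<Rightarrow> ('a \<Rightarrow> nat) \<Rightarrow> nat \<Rightarrow> nat" where
  "lamf A pt pb j = (if j < card A then pb (inv_into A pt (j+1)) - 1 else card A)"

definition muf :: "'a set \<Rightarrow> ('a \<Rightarrow> nat) \<Rightarrow> ('a \<Rightarrow> nat) \<Rightarrow> nat \<Rightarrow> nat" where
  "muf A pt pb k = (if k = 0 then 0 else pt (inv_into A pb k))"

definition tauf :: "'a set \<Rightarrow> ('a \<Rightarrow> nat) \<Rightarrow> ('a \<Rightarrow> nat) \<Rightarrow> nat \<Rightarrow> nat" where
  "tauf A pt pb j = muf A pt pb (lamf A pt pb j)"

lemma perm_facts: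
  assumes "is_perm A pt pb"
  shows "finite A" "inj_on pt A" "inj_on pb A" "pt ` A = {1..card A}" "pb ` A = {1..card A}"
  using assms unfolding is_perm_def bij_betw_def by auto

lemma pt_range: "is_perm A pt pb \<Longrightarrow> a \<in> A \<Longrightarrow> 1 \<le> pt a \<and> pt a \<le> card A"
  using perm_facts(4) by fastforce

lemma pb_range: "is_perm A pt pb \<Longrightarrow> a \<in> A \<Longrightarrow> 1 \<le> pb a \<and> pb a \<le> card A"
  using perm_facts(5) by fastforce

lemma inv_pt:
  assumes "is_perm A pt pb" "1 \<le> i" "i \<le> card A"
  shows "inv_into A pt i \<in> A" "pt (inv_into A pt i) = i"
proof -
  have "i \<in> pt ` A" using perm_facts(4)[OF assms(1)] assms(2,3) by auto
  then show "inv_into A pt i \<in> A" "pt (inv_into A pt i) = i"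
    by (auto intro: inv_into_into f_inv_into_f)
qed

lemma inv_pb:
  assumes "is_perm A pt pb" "1 \<le> i" "i \<le> card A"
  shows "inv_into A pb i \<in> A" "pb (inv_into A pb i) = i"
proof -
  have "i \<in> pb ` A" using perm_facts(5)[OF assms(1)] assms(2,3) by auto
  then show "inv_into A pb i \<in> A" "pb (inv_into A pb i) = i"
    by (auto intro: inv_into_into f_inv_into_f)
qed

lemma inv_pt_eq: "is_perm A pt pb \<Longrightarrow> a \<in> A \<Longrightarrow> inv_into A pt (pt a) = a"
  using perm_facts(2) by (metis inv_into_f_f)

lemma inv_pb_eq: "is_perm A pt pb \<Longrightarrow> a \<in> A \<Longrightarrow> inv_into A pb (pb a) = a"
  using perm_facts(3) by (metis inv_into_f_f)

context
  fixes A :: "'a set" and pt pb :: "'a \<Rightarrow> nat"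
  assumes P: "is_perm A pt pb"
begin

lemma lam_lt: "j < card A \<Longrightarrow> lamf A pt pb j < card A"
proof -
  assume j: "j < card A"
  have "inv_into A pt (j+1) \<in> A" using inv_pt(1)[OF P, of "j+1"] j by simp
  then have "1 \<le> pb (inv_into A pt (j+1)) \<and> pb (inv_into A pt (j+1)) \<le> card A" by (rule pb_range[OF P])
  then show ?thesis using j unfolding lamf_def by (simp, arith)
qed

lemma lam_d: "lamf A pt pb (card A) = card A"
  unfolding lamf_def by simp

lemma lam_inj: "inj_on (lamf A pt pb) {..card A}"
proof (rule inj_onI)
  fix x y assume x: "x \<in> {..card A}" and y: "y \<in> {..card A}" and e: "lamf A pt pb x = lamf A pt pb y"
  show "x = y"
  proof (cases "x < card A \<and> y < card A")
    case True
    let ?a = "inv_into A pt (x+1)" and ?b = "inv_into A pt (y+1)"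
    have a: "?a \<in> A" "pt ?a = x + 1" using inv_pt[OF P, of "x+1"] True by auto
    have b: "?b \<in> A" "pt ?b = y + 1" using inv_pt[OF P, of "y+1"] True by auto
    have "pb ?a - 1 = pb ?b - 1" using e True unfolding lamf_def by simp
    then have "pb ?a = pb ?b" using pb_range[OF P a(1)] pb_range[OF P b(1)] by linarith
    then have "?a = ?b" using perm_facts(3)[OF P] a b by (meson inj_on_def)
    then show ?thesis using a b by simp
  next
    case False
    have xd: "x \<le> card A" "y \<le> card A" using x y by auto
    have "x = card A \<or> y = card A" using False xd by linarith
    then show ?thesis
    proof
      assume xe: "x = card A"
      show ?thesis
      proof (rule ccontr)
        assume "x \<noteq> y"
        then have "y < card A" using xe xd by linarith
        then have "lamf A pt pb y < card A" by (rule lam_lt)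
        then show False using e xe lam_d by simp
      qed
    next
      assume ye: "y = card A"
      show ?thesis
      proof (rule ccontr)
        assume "x \<noteq> y"
        then have "x < card A" using ye xd by linarith
        then have "lamf A pt pb x < card A" by (rule lam_lt)
        then show False using e ye lam_d by simp
      qed
    qed
  qed
qed

lemma lam_maps: "lamf A pt pb ` {..card A} \<subseteq> {..card A}"
  using lam_lt lam_d by (auto simp: le_less)

lemma lam_onto: "lamf A pt pb ` {..card A} = {..card A}"
  using endo_inj_surj[OF _ lam_maps lam_inj] by simp

lemma mu_0: "muf A pt pb 0 = 0"
  unfolding muf_def by simp

lemma mu_range: "1 \<le> k \<Longrightarrow> k \<le> card A \<Longrightarrow> 1 \<le> muf A pt pb k \<and> muf A pt pb k \<le> card A"
proof -
  assume k: "1 \<le> k" "k \<le> card A"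
  have "inv_into A pb k \<in> A" using inv_pb(1)[OF P k] .
  then have "1 \<le> pt (inv_into A pb k) \<and> pt (inv_into A pb k) \<le> card A" by (rule pt_range[OF P])
  then show ?thesis using k unfolding muf_def by simp
qed

lemma mu_inj: "inj_on (muf A pt pb) {..card A}"
proof (rule inj_onI)
  fix x y assume x: "x \<in> {..card A}" and y: "y \<in> {..card A}" and e: "muf A pt pb x = muf A pt pb y"
  show "x = y"
  proof (cases "x = 0")
    case x0: True
    show ?thesis
    proof (rule ccontr)
      assume "x \<noteq> y"
      then have "1 \<le> y" "y \<le> card A" using x0 y by auto
      then have "1 \<le> muf A pt pb y" using mu_range[of y] by blast
      then show False using e x0 mu_0 by simp
    qed
  next
    case xn: False
    show ?thesis
    proof (cases "y = 0")
      case y0: True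
      show ?thesis
      proof (rule ccontr)
        assume "x \<noteq> y"
        then have "1 \<le> x" "x \<le> card A" using y0 x by auto
        then have "1 \<le> muf A pt pb x" using mu_range[of x] by blast
        then show False using e y0 mu_0 by simp
      qed
    next
      case yn: False
      have x1: "1 \<le> x" "x \<le> card A" using xn x by auto
      have y1: "1 \<le> y" "y \<le> card A" using yn y by auto
      let ?a = "inv_into A pb x" and ?b = "inv_into A pb y"
      note a = inv_pb[OF P x1]
      note b = inv_pb[OF P y1]
      have ma: "muf A pt pb x = pt ?a" using xn unfolding muf_def by (rule if_not_P)
      have mb: "muf A pt pb y = pt ?b" using yn unfolding muf_def by (rule if_not_P)
      have "pt ?a = pt ?b" using e unfolding ma mb .
      then have "?a = ?b" using inj_onD[OF perm_facts(2)[OF P]] a(1) b(1) by blast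
      then show ?thesis using a(2) b(2) by metis
    qed
  qed
qed

lemma mu_maps: "muf A pt pb ` {..card A} \<subseteq> {..card A}"
proof
  fix y assume "y \<in> muf A pt pb ` {..card A}"
  then obtain k where k: "k \<le> card A" "y = muf A pt pb k" by auto
  then show "y \<in> {..card A}" using mu_range[of k] mu_0 by (cases "k = 0") auto
qed

lemma tau_inj: "inj_on (tauf A pt pb) {..card A}"
proof -
  have "inj_on (muf A pt pb \<circ> lamf A pt pb) {..card A}"
    using comp_inj_on[OF lam_inj] mu_inj lam_onto by simp
  then show ?thesis unfolding tauf_def comp_def .
qed

lemma tau_maps: "tauf A pt pb ` {..card A} \<subseteq> {..card A}"
proof
  fix y assume "y \<in> tauf A pt pb ` {..card A}"
  then obtain k where k: "k \<le> card A" "y = muf A pt pb (lamf A pt pb k)" unfolding tauf_def by auto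
  have "lamf A pt pb k \<in> {..card A}" using lam_maps k(1) by auto
  then show "y \<in> {..card A}" using mu_maps k(2) by auto
qed

end


lemma tc_0: "top_corner A 0 = 0"
  unfolding top_corner_def by simp

lemma tc_d: "1 \<le> card A \<Longrightarrow> top_corner A (card A) = card A"
  unfolding top_corner_def by simp

lemma tc_pos: "1 \<le> x \<Longrightarrow> x \<le> card A \<Longrightarrow> top_corner A x = 2 * card A - x"
  unfolding top_corner_def by simp

lemma tc_inj: "inj_on (top_corner A) {..card A}"
proof (rule inj_onI)
  fix x y assume x: "x \<in> {..card A}" and y: "y \<in> {..card A}" and e: "top_corner A x = top_corner A y"
  then show "x = y" unfolding top_corner_def by (auto split: if_splits)
qed

lemma tc_small: "x \<le> card A \<Longrightarrow> top_corner A x \<le> card A \<Longrightarrow> x = 0 \<or> x = card A"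
  unfolding top_corner_def by (auto split: if_splits)

lemma tc_lt: "x \<le> card A \<Longrightarrow> 1 \<le> card A \<Longrightarrow> top_corner A x < 2 * card A"
  unfolding top_corner_def by (auto split: if_splits)

lemma tc_mid: "1 \<le> x \<Longrightarrow> x < card A \<Longrightarrow> card A < top_corner A x"
  unfolding top_corner_def by (auto split: if_splits)

definition cls :: "'a set \<Rightarrow> ('a \<Rightarrow> nat) \<Rightarrow> ('a \<Rightarrow> nat) \<Rightarrow> nat set \<Rightarrow> nat set" where
  "cls A pt pb Q = top_corner A ` Q \<union> lamf A pt pb ` Q"

context
  fixes A :: "'a set" and pt pb :: "'a \<Rightarrow> nat"
  assumes P: "is_perm A pt pb" and d1: "1 \<le> card A"
begin

lemma glue_char:
  "glue_rel A pt pb = (\<lambda>i. (top_corner A i, lamf A pt pb i)) ` {..<card A}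
      \<union> (\<lambda>k. (top_corner A (muf A pt pb k), k)) ` {1..card A}"
proof
  show "glue_rel A pt pb \<subseteq> (\<lambda>i. (top_corner A i, lamf A pt pb i)) ` {..<card A}
      \<union> (\<lambda>k. (top_corner A (muf A pt pb k), k)) ` {1..card A}"
  proof
    fix z assume "z \<in> glue_rel A pt pb"
    then obtain a where a: "a \<in> A" and z: "z = (top_corner A (pt a - 1), bot_corner A (pb a - 1)) \<or>
        z = (top_corner A (pt a), bot_corner A (pb a))"
      unfolding glue_rel_def by blast
    have ra: "1 \<le> pt a" "pt a \<le> card A" using pt_range[OF P a] by auto
    have rb: "1 \<le> pb a" "pb a \<le> card A" using pb_range[OF P a] by auto
    have ia: "inv_into A pt (pt a) = a" using inv_pt_eq[OF P a] .
    have ib: "inv_into A pb (pb a) = a" using inv_pb_eq[OF P a] .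
    have l: "lamf A pt pb (pt a - 1) = pb a - 1"
      using ra ia unfolding lamf_def by simp
    have m: "muf A pt pb (pb a) = pt a"
      using rb ib unfolding muf_def by simp
    from z show "z \<in> (\<lambda>i. (top_corner A i, lamf A pt pb i)) ` {..<card A}
      \<union> (\<lambda>k. (top_corner A (muf A pt pb k), k)) ` {1..card A}"
    proof
      assume z1: "z = (top_corner A (pt a - 1), bot_corner A (pb a - 1))"
      have "z = (top_corner A (pt a - 1), lamf A pt pb (pt a - 1))"
        unfolding z1 l bot_corner_def ..
      moreover have "pt a - 1 \<in> {..<card A}" using ra by auto
      ultimately show ?thesis by blast
    next
      assume z2: "z = (top_corner A (pt a), bot_corner A (pb a))"
      have "z = (top_corner A (muf A pt pb (pb a)), pb a)"
        unfolding z2 m bot_corner_def ..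
      moreover have "pb a \<in> {1..card A}" using rb by auto
      ultimately show ?thesis by blast
    qed
  qed
next
  show "(\<lambda>i. (top_corner A i, lamf A pt pb i)) ` {..<card A}
      \<union> (\<lambda>k. (top_corner A (muf A pt pb k), k)) ` {1..card A} \<subseteq> glue_rel A pt pb"
  proof
    fix z assume "z \<in> (\<lambda>i. (top_corner A i, lamf A pt pb i)) ` {..<card A}
      \<union> (\<lambda>k. (top_corner A (muf A pt pb k), k)) ` {1..card A}"
    then show "z \<in> glue_rel A pt pb"
    proof
      assume "z \<in> (\<lambda>i. (top_corner A i, lamf A pt pb i)) ` {..<card A}"
      then obtain i where i: "i < card A" "z = (top_corner A i, lamf A pt pb i)" by auto
      define a where "a = inv_into A pt (i + 1)"
      have a: "a \<in> A" "pt a = i + 1" using inv_pt[OF P, of "i+1"] i(1) unfolding a_def by auto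
      have "lamf A pt pb i = pb a - 1" using i(1) unfolding lamf_def a_def by simp
      then have "z = (top_corner A (pt a - 1), bot_corner A (pb a - 1))"
        using i(2) a(2) unfolding bot_corner_def by simp
      then show ?thesis unfolding glue_rel_def using a(1) by blast
    next
      assume "z \<in> (\<lambda>k. (top_corner A (muf A pt pb k), k)) ` {1..card A}"
      then obtain k where k: "1 \<le> k" "k \<le> card A" "z = (top_corner A (muf A pt pb k), k)" by auto
      define a where "a = inv_into A pb k"
      have a: "a \<in> A" "pb a = k" using inv_pb[OF P k(1,2)] unfolding a_def by auto
      have "muf A pt pb k = pt a" using k(1) unfolding muf_def a_def by simp
      then have "z = (top_corner A (pt a), bot_corner A (pb a))"
        using k(3) a(2) unfolding bot_corner_def by simp
      then show ?thesis unfolding glue_rel_def using a(1) by blast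
    qed
  qed
qed

lemma lam_surj: "y \<le> card A \<Longrightarrow> \<exists>i. i \<le> card A \<and> lamf A pt pb i = y"
  using lam_onto[OF P] by (metis atMost_iff imageE)

context
  fixes Q :: "nat set"
  assumes Osub: "Q \<subseteq> {..card A}"
    and Ocl: "\<And>i. i \<le> card A \<Longrightarrow> i \<in> Q \<longleftrightarrow> tauf A pt pb i \<in> Q"
begin

lemma tc_in_cls: "x \<le> card A \<Longrightarrow> top_corner A x \<in> cls A pt pb Q \<longleftrightarrow> x \<in> Q"
proof
  assume x: "x \<le> card A" and c: "top_corner A x \<in> cls A pt pb Q"
  from c consider (t) i where "i \<in> Q" "top_corner A x = top_corner A i"
    | (l) i where "i \<in> Q" "top_corner A x = lamf A pt pb i"
    unfolding cls_def by blast
  then show "x \<in> Q"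
  proof cases
    case t
    have "i \<le> card A" using t(1) Osub by auto
    then have "x = i" using inj_onD[OF tc_inj t(2)] x by auto
    then show ?thesis using t(1) by simp
  next
    case l
    have i: "i \<le> card A" using l(1) Osub by auto
    have "lamf A pt pb i \<le> card A" using lam_maps[OF P] i by auto
    then have "x = 0 \<or> x = card A" using tc_small[OF x] l(2) by simp
    then show ?thesis
    proof
      assume x0: "x = 0"
      then have "lamf A pt pb i = 0" using l(2) tc_0[of A] by simp
      then have "tauf A pt pb i = 0" unfolding tauf_def using mu_0[OF P] by simp
      then show ?thesis using Ocl[OF i] l(1) x0 by simp
    next
      assume xd: "x = card A"
      then have "lamf A pt pb i = card A" using l(2) tc_d[OF d1] by simp
      then have "i = card A" using lam_lt[OF P, of i] i by (cases "i < card A") auto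
      then show ?thesis using l(1) xd by simp
    qed
  qed
next
  assume "x \<in> Q"
  then show "top_corner A x \<in> cls A pt pb Q" unfolding cls_def by blast
qed

lemma bot_in_cls: "i \<le> card A \<Longrightarrow> lamf A pt pb i \<in> cls A pt pb Q \<longleftrightarrow> i \<in> Q"
proof
  assume i: "i \<le> card A" and c: "lamf A pt pb i \<in> cls A pt pb Q"
  from c consider (t) j where "j \<in> Q" "lamf A pt pb i = top_corner A j"
    | (l) j where "j \<in> Q" "lamf A pt pb i = lamf A pt pb j"
    unfolding cls_def by blast
  then show "i \<in> Q"
  proof cases
    case l
    have "j \<le> card A" using l(1) Osub by auto
    then have "i = j" using inj_onD[OF lam_inj[OF P] l(2)] i by auto
    then show ?thesis using l(1) by simp
  next
    case t
    have j: "j \<le> card A" using t(1) Osub by auto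
    have "lamf A pt pb i \<le> card A" using lam_maps[OF P] i by auto
    then have "j = 0 \<or> j = card A" using tc_small[OF j] t(2) by simp
    then show ?thesis
    proof
      assume j0: "j = 0"
      then have "lamf A pt pb i = 0" using t(2) tc_0[of A] by simp
      then have "tauf A pt pb i = 0" unfolding tauf_def using mu_0[OF P] by simp
      then show ?thesis using Ocl[OF i] t(1) j0 by simp
    next
      assume jd: "j = card A"
      then have "lamf A pt pb i = card A" using t(2) tc_d[OF d1] by simp
      then have "i = card A" using lam_lt[OF P, of i] i by (cases "i < card A") auto
      then show ?thesis using t(1) jd by simp
    qed
  qed
next
  assume "i \<in> Q"
  then show "lamf A pt pb i \<in> cls A pt pb Q" unfolding cls_def by blast
qed

lemma glue_closed:
  assumes "(x, y) \<in> glue_rel A pt pb"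
  shows "x \<in> cls A pt pb Q \<longleftrightarrow> y \<in> cls A pt pb Q"
proof -
  from assms[unfolded glue_char] consider
      (a) i where "i < card A" "x = top_corner A i" "y = lamf A pt pb i"
    | (b) k where "1 \<le> k" "k \<le> card A" "x = top_corner A (muf A pt pb k)" "y = k"
    by auto
  then show ?thesis
  proof cases
    case a
    then show ?thesis using tc_in_cls[of i] bot_in_cls[of i] by simp
  next
    case b
    obtain l where l: "l \<le> card A" "lamf A pt pb l = k" using lam_surj b(2) by blast
    have mk: "muf A pt pb k \<le> card A" using mu_range[OF P b(1,2)] by simp
    have "x \<in> cls A pt pb Q \<longleftrightarrow> muf A pt pb k \<in> Q" using tc_in_cls[OF mk] b(3) by simp
    also have "\<dots> \<longleftrightarrow> tauf A pt pb l \<in> Q" unfolding tauf_def l(2) ..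
    also have "\<dots> \<longleftrightarrow> l \<in> Q" using Ocl[OF l(1)] by simp
    also have "\<dots> \<longleftrightarrow> y \<in> cls A pt pb Q" using bot_in_cls[OF l(1)] l(2) b(4) by simp
    finally show ?thesis .
  qed
qed

lemma ve_closed:
  assumes "(x, y) \<in> vertex_equiv A pt pb" "x \<in> cls A pt pb Q"
  shows "y \<in> cls A pt pb Q"
  using assms(1) unfolding vertex_equiv_def
proof (induction rule: rtrancl_induct)
  case base
  then show ?case using assms(2) .
next
  case (step y z)
  from step(2) have "(y, z) \<in> glue_rel A pt pb \<or> (z, y) \<in> glue_rel A pt pb" by blast
  then show ?case using glue_closed step(3) by blast
qed

end

end


section \<open>Classes are orbits\<close>

lemma ve_sym: "(x, y) \<in> vertex_equiv A pt pb \<Longrightarrow> (y, x) \<in> vertex_equiv A pt pb"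
proof -
  assume "(x, y) \<in> vertex_equiv A pt pb"
  then have "(y, x) \<in> ((glue_rel A pt pb \<union> (glue_rel A pt pb)\<inverse>)\<inverse>)\<^sup>*"
    unfolding vertex_equiv_def by (rule rtrancl_converseI)
  moreover have "(glue_rel A pt pb \<union> (glue_rel A pt pb)\<inverse>)\<inverse> = glue_rel A pt pb \<union> (glue_rel A pt pb)\<inverse>"
    by auto
  ultimately show ?thesis unfolding vertex_equiv_def by simp
qed

lemma ve_trans: "(x, y) \<in> vertex_equiv A pt pb \<Longrightarrow> (y, z) \<in> vertex_equiv A pt pb \<Longrightarrow> (x, z) \<in> vertex_equiv A pt pb"
  unfolding vertex_equiv_def by (rule rtrancl_trans)

lemma ve_refl: "(x, x) \<in> vertex_equiv A pt pb"
  unfolding vertex_equiv_def by simp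

lemma ve_glue: "(x, y) \<in> glue_rel A pt pb \<Longrightarrow> (x, y) \<in> vertex_equiv A pt pb"
  unfolding vertex_equiv_def by blast

lemma ve_image_eq: "(x, y) \<in> vertex_equiv A pt pb \<Longrightarrow> vertex_equiv A pt pb `` {x} = vertex_equiv A pt pb `` {y}"
proof -
  assume xy: "(x, y) \<in> vertex_equiv A pt pb"
  have yx: "(y, x) \<in> vertex_equiv A pt pb" using ve_sym[OF xy] .
  show ?thesis
  proof
    show "vertex_equiv A pt pb `` {x} \<subseteq> vertex_equiv A pt pb `` {y}"
      using ve_trans[OF yx] by blast
    show "vertex_equiv A pt pb `` {y} \<subseteq> vertex_equiv A pt pb `` {x}"
      using ve_trans[OF xy] by blast
  qed
qed

context
  fixes A :: "'a set" and pt pb :: "'a \<Rightarrow> nat"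
  assumes P: "is_perm A pt pb" and d1: "1 \<le> card A"
begin

lemma orb_closed:
  assumes j: "j \<le> card A"
  shows "orb (tauf A pt pb) j \<subseteq> {..card A}"
    "\<And>i. i \<le> card A \<Longrightarrow> i \<in> orb (tauf A pt pb) j \<longleftrightarrow> tauf A pt pb i \<in> orb (tauf A pt pb) j"
proof -
  show "orb (tauf A pt pb) j \<subseteq> {..card A}"
    using orb_subset[OF tau_maps[OF P]] j by auto
  fix i assume i: "i \<le> card A"
  show "i \<in> orb (tauf A pt pb) j \<longleftrightarrow> tauf A pt pb i \<in> orb (tauf A pt pb) j"
  proof
    assume "i \<in> orb (tauf A pt pb) j"
    then show "tauf A pt pb i \<in> orb (tauf A pt pb) j" by (rule orb_step)
  next
    assume "tauf A pt pb i \<in> orb (tauf A pt pb) j"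
    then show "i \<in> orb (tauf A pt pb) j"
      using orb_back[OF finite_atMost tau_inj[OF P] tau_maps[OF P]] i j by auto
  qed
qed

lemma ve_lam: "i \<le> card A \<Longrightarrow> (top_corner A i, lamf A pt pb i) \<in> vertex_equiv A pt pb"
proof -
  assume i: "i \<le> card A"
  show ?thesis
  proof (cases "i < card A")
    case True
    then have "(top_corner A i, lamf A pt pb i) \<in> glue_rel A pt pb"
      unfolding glue_char[OF P d1] by blast
    then show ?thesis by (rule ve_glue)
  next
    case False
    then have "i = card A" using i by simp
    then have "top_corner A i = lamf A pt pb i" using tc_d[OF d1] lam_d[OF P] by simp
    then show ?thesis using ve_refl by metis
  qed
qed

lemma ve_mu: "k \<le> card A \<Longrightarrow> (k, top_corner A (muf A pt pb k)) \<in> vertex_equiv A pt pb"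
proof -
  assume k: "k \<le> card A"
  show ?thesis
  proof (cases "k = 0")
    case True
    then have "top_corner A (muf A pt pb k) = k" using mu_0[OF P] tc_0[of A] by simp
    then show ?thesis using ve_refl by metis
  next
    case False
    then have "(top_corner A (muf A pt pb k), k) \<in> glue_rel A pt pb"
      unfolding glue_char[OF P d1] using k by auto
    then show ?thesis by (rule ve_sym[OF ve_glue])
  qed
qed

lemma ve_tau: "i \<le> card A \<Longrightarrow> (top_corner A i, top_corner A (tauf A pt pb i)) \<in> vertex_equiv A pt pb"
proof -
  assume i: "i \<le> card A"
  have "lamf A pt pb i \<le> card A" using lam_maps[OF P] i by auto
  then show ?thesis using ve_trans[OF ve_lam[OF i] ve_mu] unfolding tauf_def by blast
qed

lemma ve_iter: "j \<le> card A \<Longrightarrow> (top_corner A j, top_corner A ((tauf A pt pb ^^ n) j)) \<in> vertex_equiv A pt pb"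
proof (induction n)
  case 0
  then show ?case using ve_refl by simp
next
  case (Suc n)
  have "(tauf A pt pb ^^ n) j \<le> card A" using funpow_in[OF tau_maps[OF P], of j n] Suc.prems by auto
  then have "(top_corner A ((tauf A pt pb ^^ n) j), top_corner A ((tauf A pt pb ^^ Suc n) j)) \<in> vertex_equiv A pt pb"
    using ve_tau by simp
  then show ?case using ve_trans Suc by blast
qed

lemma class_eq:
  assumes j: "j \<le> card A"
  shows "vertex_equiv A pt pb `` {top_corner A j} = cls A pt pb (orb (tauf A pt pb) j)"
proof
  show "vertex_equiv A pt pb `` {top_corner A j} \<subseteq> cls A pt pb (orb (tauf A pt pb) j)"
  proof
    fix y assume "y \<in> vertex_equiv A pt pb `` {top_corner A j}"
    then have y: "(top_corner A j, y) \<in> vertex_equiv A pt pb" by simp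
    have "top_corner A j \<in> cls A pt pb (orb (tauf A pt pb) j)"
      unfolding cls_def using orb_self by blast
    then show "y \<in> cls A pt pb (orb (tauf A pt pb) j)"
      using ve_closed[OF P d1 orb_closed(1)[OF j] orb_closed(2)[OF j] y] by blast
  qed
next
  show "cls A pt pb (orb (tauf A pt pb) j) \<subseteq> vertex_equiv A pt pb `` {top_corner A j}"
  proof
    fix y assume "y \<in> cls A pt pb (orb (tauf A pt pb) j)"
    then obtain i where i: "i \<in> orb (tauf A pt pb) j" and "y = top_corner A i \<or> y = lamf A pt pb i"
      unfolding cls_def by blast
    then obtain n where n: "i = (tauf A pt pb ^^ n) j" unfolding orb_def by auto
    have "i \<le> card A" using orb_closed(1)[OF j] i by auto
    have r1: "(top_corner A j, top_corner A i) \<in> vertex_equiv A pt pb" using ve_iter[OF j] n by simp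
    then have "(top_corner A j, y) \<in> vertex_equiv A pt pb"
      using \<open>y = top_corner A i \<or> y = lamf A pt pb i\<close> ve_trans[OF r1 ve_lam[OF \<open>i \<le> card A\<close>]] by blast
    then show "y \<in> vertex_equiv A pt pb `` {top_corner A j}" by simp
  qed
qed

lemma vclasses: "vertex_classes A pt pb = (\<lambda>j. cls A pt pb (orb (tauf A pt pb) j)) ` {..card A}"
proof
  show "vertex_classes A pt pb \<subseteq> (\<lambda>j. cls A pt pb (orb (tauf A pt pb) j)) ` {..card A}"
  proof
    fix C assume "C \<in> vertex_classes A pt pb"
    then obtain k where k: "k < 2 * card A" "C = vertex_equiv A pt pb `` {k}"
      unfolding vertex_classes_def by blast
    show "C \<in> (\<lambda>j. cls A pt pb (orb (tauf A pt pb) j)) ` {..card A}"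
    proof (cases "k \<le> card A")
      case True
      obtain l where l: "l \<le> card A" "lamf A pt pb l = k" using lam_surj[OF P d1 True] by blast
      have "C = vertex_equiv A pt pb `` {top_corner A l}"
        using k(2) ve_image_eq[OF ve_lam[OF l(1)]] l(2) by simp
      then show ?thesis using class_eq l(1) by blast
    next
      case False
      define j where "j = 2 * card A - k"
      have j: "1 \<le> j" "j \<le> card A" using False k(1) unfolding j_def by auto
      have "top_corner A j = k" using tc_pos[OF j] unfolding j_def using k(1) by simp
      then have "C = vertex_equiv A pt pb `` {top_corner A j}" using k(2) by simp
      then show ?thesis using class_eq j(2) by blast
    qed
  qed
next
  show "(\<lambda>j. cls A pt pb (orb (tauf A pt pb) j)) ` {..card A} \<subseteq> vertex_classes A pt pb"
  proof
    fix C assume "C \<in> (\<lambda>j. cls A pt pb (orb (tauf A pt pb) j)) ` {..card A}"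
    then obtain j where j: "j \<le> card A" "C = cls A pt pb (orb (tauf A pt pb) j)" by auto
    have "C = vertex_equiv A pt pb `` {top_corner A j}" using class_eq[OF j(1)] j(2) by simp
    moreover have "top_corner A j < 2 * card A" using tc_lt[OF j(1) d1] .
    ultimately show "C \<in> vertex_classes A pt pb" unfolding vertex_classes_def by blast
  qed
qed

end


context
  fixes A :: "'a set" and pt pb :: "'a \<Rightarrow> nat"
  assumes P: "is_perm A pt pb" and d1: "1 \<le> card A"
begin

lemma card_cls:
  assumes j: "j \<le> card A"
  defines "Q \<equiv> orb (tauf A pt pb) j"
  shows "card (cls A pt pb Q - {0, card A}) = 2 * card (Q - {0, card A})"
proof -
  have Qsub: "Q \<subseteq> {..card A}" unfolding Q_def using orb_closed(1)[OF P d1 j] .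
  have Qcl: "\<And>i. i \<le> card A \<Longrightarrow> i \<in> Q \<longleftrightarrow> tauf A pt pb i \<in> Q"
    unfolding Q_def using orb_closed(2)[OF P d1 j] by blast
  have finQ: "finite Q" using Qsub finite_subset by blast
  obtain l0 where l0: "l0 \<le> card A" "lamf A pt pb l0 = 0" using lam_surj[OF P d1, of 0] by auto
  have l0d: "l0 \<noteq> card A" using l0 lam_d[OF P] d1 by auto
  have l0Q: "l0 \<in> Q \<longleftrightarrow> 0 \<in> Q"
    using Qcl[OF l0(1)] l0(2) mu_0[OF P] unfolding tauf_def by simp
  let ?X = "top_corner A ` (Q - {0, card A})" and ?Y = "lamf A pt pb ` (Q - {card A, l0})"
  have eq: "cls A pt pb Q - {0, card A} = ?X \<union> ?Y"
  proof
    show "cls A pt pb Q - {0, card A} \<subseteq> ?X \<union> ?Y"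
    proof
      fix c assume c: "c \<in> cls A pt pb Q - {0, card A}"
      then consider (t) x where "x \<in> Q" "c = top_corner A x" | (l) x where "x \<in> Q" "c = lamf A pt pb x"
        unfolding cls_def by blast
      then show "c \<in> ?X \<union> ?Y"
      proof cases
        case t
        have "x \<noteq> 0"
        proof
          assume "x = 0"
          then have "c = 0" using t(2) tc_0[of A] by simp
          then show False using c by simp
        qed
        moreover have "x \<noteq> card A" using t c tc_d[OF d1] by auto
        ultimately show ?thesis using t by blast
      next
        case l
        have "x \<noteq> l0" using l c l0(2) by auto
        moreover have "x \<noteq> card A" using l c lam_d[OF P] by auto
        ultimately show ?thesis using l by blast
      qed
    qed
  next
    show "?X \<union> ?Y \<subseteq> cls A pt pb Q - {0, card A}"
    proof
      fix c assume "c \<in> ?X \<union> ?Y"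
      then consider (t) x where "x \<in> Q - {0, card A}" "c = top_corner A x"
        | (l) x where "x \<in> Q - {card A, l0}" "c = lamf A pt pb x" by blast
      then show "c \<in> cls A pt pb Q - {0, card A}"
      proof cases
        case t
        have x: "1 \<le> x" "x < card A" using t(1) Qsub by auto
        have "card A < c" using tc_mid[OF x] t(2) by simp
        then show ?thesis using t unfolding cls_def by auto
      next
        case l
        have x: "x < card A" using l(1) Qsub by auto
        have "c < card A" using lam_lt[OF P x] l(2) by simp
        moreover have "c \<noteq> 0"
        proof
          assume "c = 0"
          then have "lamf A pt pb x = lamf A pt pb l0" using l(2) l0(2) by simp
          then have "x = l0" using inj_onD[OF lam_inj[OF P]] x l0(1) by auto
          then show False using l(1) by simp
        qed
        ultimately show ?thesis using l unfolding cls_def by auto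
      qed
    qed
  qed
  have disj: "?X \<inter> ?Y = {}"
  proof -
    { fix c assume cX: "c \<in> ?X" and cY: "c \<in> ?Y"
      from cX obtain x where x: "x \<in> Q - {0, card A}" "c = top_corner A x" by blast
      have x': "1 \<le> x" "x < card A" using x(1) Qsub by auto
      from cY obtain y where y: "y \<in> Q - {card A, l0}" "c = lamf A pt pb y" by blast
      have "y < card A" using y(1) Qsub by auto
      then have "c < card A" using lam_lt[OF P] y(2) by simp
      moreover have "card A < c" using tc_mid[OF x'] x(2) by simp
      ultimately have False by simp }
    then show ?thesis by blast
  qed
  have cX: "card ?X = card (Q - {0, card A})"
    by (rule card_image, rule inj_on_subset[OF tc_inj]) (use Qsub in auto)
  have cY: "card ?Y = card (Q - {card A, l0})"
    by (rule card_image, rule inj_on_subset[OF lam_inj[OF P]]) (use Qsub in auto)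
  have e1: "Q - {0, card A} = (Q - {card A}) - {0}" by blast
  have e2: "Q - {card A, l0} = (Q - {card A}) - {l0}" by blast
  have "card (Q - {card A, l0}) = card (Q - {0, card A})"
    unfolding e1 e2 card_Diff_singleton_if using l0Q l0d d1 by auto
  then show ?thesis unfolding eq
    using card_Un_disjoint[OF _ _ disj] finQ cX cY by simp
qed

end


section \<open>Analytic part\<close>

definition polar :: "real \<Rightarrow> real \<Rightarrow> complex" where
  "polar r t = of_real r * exp (\<i> * of_real t)"

lemma cplx_polar: "Complex 1 y = polar (sqrt (1 + y^2)) (arctan y)"
proof -
  have s: "sqrt (1 + y^2) > 0" by (simp add: add_pos_nonneg)
  show ?thesis
  proof (rule complex_eqI)
    show "Re (Complex 1 y) = Re (polar (sqrt (1 + y^2)) (arctan y))"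
      unfolding polar_def using s by (simp add: Re_exp cos_arctan)
    show "Im (Complex 1 y) = Im (polar (sqrt (1 + y^2)) (arctan y))"
      unfolding polar_def using s by (simp add: Im_exp sin_arctan)
  qed
qed

lemma neg_polar: "- polar r t = polar r (t + pi)"
proof -
  have "exp (\<i> * of_real (t + pi)) = exp (\<i> * of_real t) * exp (\<i> * of_real pi)"
    by (simp add: distrib_left exp_add)
  then show ?thesis unfolding polar_def by simp
qed

lemma polar_2pi: "polar r (t + 2 * pi) = polar r t"
proof -
  have "exp (\<i> * of_real (t + 2 * pi)) = exp (\<i> * of_real t) * exp (\<i> * (of_real pi * 2))"
    by (simp add: distrib_left exp_add mult.commute)
  then show ?thesis unfolding polar_def by simp
qed

lemma arg_ratio:
  assumes "r1 > 0" "r2 > 0" "0 \<le> a1 - a2" "a1 - a2 < 2 * pi"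
  shows "Arg2pi (polar r1 a1 / polar r2 a2) = a1 - a2"
proof (rule Arg2pi_unique[of "r1 / r2"])
  have "exp (\<i> * of_real (a1 - a2)) = exp (\<i> * of_real a1) / exp (\<i> * of_real a2)"
    by (simp add: right_diff_distrib exp_diff)
  then show "complex_of_real (r1 / r2) * exp (\<i> * complex_of_real (a1 - a2)) = polar r1 a1 / polar r2 a2"
    unfolding polar_def by simp
qed (use assms in auto)


definition th :: "('a \<Rightarrow> nat) \<Rightarrow> ('a \<Rightarrow> nat) \<Rightarrow> 'a \<Rightarrow> real" where
  "th pt pb a = arctan (real (pb a) - real (pt a))"

lemma sv_polar: "side_vec pt pb a = polar (sqrt (1 + (real (pb a) - real (pt a))^2)) (th pt pb a)"
  unfolding side_vec_def th_def by (rule cplx_polar)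

lemma sv_r: "sqrt (1 + (real (pb a) - real (pt a))^2) > 0"
  by (simp add: add_pos_nonneg)

lemma th_bounds: "- (pi/2) < th pt pb a" "th pt pb a < pi/2"
  unfolding th_def by (rule arctan_lbound, rule arctan_ubound)

context
  fixes A :: "'a set" and pt pb :: "'a \<Rightarrow> nat"
  assumes P: "is_perm A pt pb" and d1: "1 \<le> card A"
begin

lemma bv_0: "bot_vertex A pt pb 0 = 0"
proof -
  have e: "{a \<in> A. pb a \<le> 0} = {}" using pb_range[OF P] by fastforce
  show ?thesis unfolding bot_vertex_def e by simp
qed

lemma tv_0: "top_vertex A pt pb 0 = 0"
proof -
  have e: "{a \<in> A. pt a \<le> 0} = {}" using pt_range[OF P] by fastforce
  show ?thesis unfolding top_vertex_def e by simp
qed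

lemma bv_step:
  assumes j: "1 \<le> j" "j \<le> card A"
  shows "bot_vertex A pt pb j = bot_vertex A pt pb (j - 1) + side_vec pt pb (inv_into A pb j)"
proof -
  let ?b = "inv_into A pb j"
  have b: "?b \<in> A" "pb ?b = j" using inv_pb[OF P j] by auto
  have eq: "{a \<in> A. pb a \<le> j} = insert ?b {a \<in> A. pb a \<le> j - 1}"
  proof
    show "{a \<in> A. pb a \<le> j} \<subseteq> insert ?b {a \<in> A. pb a \<le> j - 1}"
    proof
      fix a assume a: "a \<in> {a \<in> A. pb a \<le> j}"
      show "a \<in> insert ?b {a \<in> A. pb a \<le> j - 1}"
      proof (cases "pb a = j")
        case True
        then have "a = ?b" using inv_pb_eq[OF P] a by fastforce
        then show ?thesis by simp
      next
        case False
        then show ?thesis using a by auto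
      qed
    qed
    show "insert ?b {a \<in> A. pb a \<le> j - 1} \<subseteq> {a \<in> A. pb a \<le> j}" using b by auto
  qed
  have nb: "?b \<notin> {a \<in> A. pb a \<le> j - 1}" using b j by auto
  have fin: "finite {a \<in> A. pb a \<le> j - 1}" using perm_facts(1)[OF P] by simp
  show ?thesis unfolding bot_vertex_def eq sum.insert[OF fin nb] by (simp add: add.commute)
qed

lemma tv_step:
  assumes j: "1 \<le> j" "j \<le> card A"
  shows "top_vertex A pt pb j = top_vertex A pt pb (j - 1) + side_vec pt pb (inv_into A pt j)"
proof -
  let ?b = "inv_into A pt j"
  have b: "?b \<in> A" "pt ?b = j" using inv_pt[OF P j] by auto
  have eq: "{a \<in> A. pt a \<le> j} = insert ?b {a \<in> A. pt a \<le> j - 1}"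
  proof
    show "{a \<in> A. pt a \<le> j} \<subseteq> insert ?b {a \<in> A. pt a \<le> j - 1}"
    proof
      fix a assume a: "a \<in> {a \<in> A. pt a \<le> j}"
      show "a \<in> insert ?b {a \<in> A. pt a \<le> j - 1}"
      proof (cases "pt a = j")
        case True
        then have "a = ?b" using inv_pt_eq[OF P] a by fastforce
        then show ?thesis by simp
      next
        case False
        then show ?thesis using a by auto
      qed
    qed
    show "insert ?b {a \<in> A. pt a \<le> j - 1} \<subseteq> {a \<in> A. pt a \<le> j}" using b by auto
  qed
  have nb: "?b \<notin> {a \<in> A. pt a \<le> j - 1}" using b j by auto
  have fin: "finite {a \<in> A. pt a \<le> j - 1}" using perm_facts(1)[OF P] by simp
  show ?thesis unfolding top_vertex_def eq sum.insert[OF fin nb] by (simp add: add.commute)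
qed

lemma bv_tv_d: "bot_vertex A pt pb (card A) = top_vertex A pt pb (card A)"
proof -
  have "{a \<in> A. pb a \<le> card A} = A" "{a \<in> A. pt a \<le> card A} = A"
    using pb_range[OF P] pt_range[OF P] by auto
  then show ?thesis unfolding bot_vertex_def top_vertex_def by simp
qed

lemma cp_bot: "k \<le> card A \<Longrightarrow> corner_pos A pt pb k = bot_vertex A pt pb k"
  unfolding corner_pos_def by simp

lemma cp_top: "card A \<le> k \<Longrightarrow> corner_pos A pt pb k = top_vertex A pt pb (2 * card A - k)"
proof -
  assume k: "card A \<le> k"
  show ?thesis
  proof (cases "k = card A")
    case True
    then show ?thesis unfolding corner_pos_def using bv_tv_d by simp
  next
    case False
    then show ?thesis unfolding corner_pos_def using k by simp
  qed
qed

end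


lemma modlem: "x < (n::nat) \<Longrightarrow> (x + n) mod n = x"
  by simp

lemma R1: "th pt pb b \<le> th pt pb a \<Longrightarrow> Arg2pi (side_vec pt pb a / side_vec pt pb b) = th pt pb a - th pt pb b"
  unfolding sv_polar[of pt pb a] sv_polar[of pt pb b]
  by (rule arg_ratio[OF sv_r sv_r]) (use th_bounds[of pt pb a] th_bounds[of pt pb b] in auto)

lemma R2: "Arg2pi (- side_vec pt pb a / side_vec pt pb b) = th pt pb a + pi - th pt pb b"
  unfolding sv_polar[of pt pb a] sv_polar[of pt pb b] neg_polar
  by (rule arg_ratio[OF sv_r sv_r]) (use th_bounds[of pt pb a] th_bounds[of pt pb b] in auto)

lemma R3: "Arg2pi (side_vec pt pb a / - side_vec pt pb b) = th pt pb a + pi - th pt pb b"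
proof -
  have "Arg2pi (side_vec pt pb a / - side_vec pt pb b) = (th pt pb a + 2 * pi) - (th pt pb b + pi)"
    unfolding sv_polar[of pt pb a] sv_polar[of pt pb b] neg_polar polar_2pi[symmetric, of _ "th pt pb a"]
    by (rule arg_ratio[OF sv_r sv_r]) (use th_bounds[of pt pb a] th_bounds[of pt pb b] in auto)
  then show ?thesis by simp
qed

lemma R4: "th pt pb b \<le> th pt pb a \<Longrightarrow> Arg2pi (- side_vec pt pb a / - side_vec pt pb b) = th pt pb a - th pt pb b"
  using R1 by (simp only: minus_divide_divide)

context
  fixes A :: "'a set" and pt pb :: "'a \<Rightarrow> nat"
  assumes P: "is_perm A pt pb" and d1: "1 \<le> card A"
begin

lemma ca_bot:
  assumes k: "1 \<le> k" "k < card A"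
  shows "corner_angle A pt pb k = th pt pb (inv_into A pb k) + pi - th pt pb (inv_into A pb (k + 1))"
proof -
  let ?d = "card A"
  have m1: "(k + 2 * ?d - 1) mod (2 * ?d) = k - 1"
  proof -
    have e: "k + 2 * ?d - 1 = (k - 1) + 2 * ?d" using k by simp
    show ?thesis unfolding e by (rule modlem) (use k in simp)
  qed
  have m2: "(k + 1) mod (2 * ?d) = k + 1" using k by simp
  have v: "corner_pos A pt pb k = bot_vertex A pt pb k" using cp_bot[OF P d1] k by simp
  have u: "corner_pos A pt pb (k - 1) = bot_vertex A pt pb (k - 1)" using cp_bot[OF P d1] k by simp
  have w: "corner_pos A pt pb (k + 1) = bot_vertex A pt pb (k + 1)" using cp_bot[OF P d1] k by simp
  have s1: "bot_vertex A pt pb k = bot_vertex A pt pb (k - 1) + side_vec pt pb (inv_into A pb k)"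
    using bv_step[OF P d1] k by simp
  have s2: "bot_vertex A pt pb (k + 1) = bot_vertex A pt pb k + side_vec pt pb (inv_into A pb (k + 1))"
    using bv_step[OF P d1, of "k + 1"] k by simp
  have "corner_angle A pt pb k = Arg2pi ((bot_vertex A pt pb (k - 1) - bot_vertex A pt pb k) /
      (bot_vertex A pt pb (k + 1) - bot_vertex A pt pb k))"
    unfolding corner_angle_def Let_def m1 m2 v u w ..
  also have "\<dots> = Arg2pi (- side_vec pt pb (inv_into A pb k) / side_vec pt pb (inv_into A pb (k + 1)))"
    using s1 s2 by simp
  also have "\<dots> = th pt pb (inv_into A pb k) + pi - th pt pb (inv_into A pb (k + 1))" by (rule R2)
  finally show ?thesis .
qed

lemma ca_top:
  assumes j: "1 \<le> j" "j < card A"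
  shows "corner_angle A pt pb (2 * card A - j) = th pt pb (inv_into A pt (j + 1)) + pi - th pt pb (inv_into A pt j)"
proof -
  let ?d = "card A"
  let ?k = "2 * ?d - j"
  have m1: "(?k + 2 * ?d - 1) mod (2 * ?d) = 2 * ?d - (j + 1)"
  proof -
    have e: "?k + 2 * ?d - 1 = (2 * ?d - (j + 1)) + 2 * ?d" using j by simp
    show ?thesis unfolding e by (rule modlem) (use j in simp)
  qed
  have v: "corner_pos A pt pb ?k = top_vertex A pt pb j" using cp_top[OF P d1, of ?k] j by simp
  have u: "corner_pos A pt pb (2 * ?d - (j + 1)) = top_vertex A pt pb (j + 1)"
    using cp_top[OF P d1, of "2 * ?d - (j + 1)"] j by simp
  have w: "corner_pos A pt pb ((?k + 1) mod (2 * ?d)) = top_vertex A pt pb (j - 1)"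
  proof (cases "j = 1")
    case True
    then have e: "?k + 1 = 2 * ?d" using j by simp
    have "(?k + 1) mod (2 * ?d) = 0" unfolding e by simp
    then show ?thesis using cp_bot[OF P d1, of 0] bv_0[OF P d1] tv_0[OF P d1] True by simp
  next
    case False
    then have "(?k + 1) mod (2 * ?d) = 2 * ?d - (j - 1)" using j by simp
    then show ?thesis using cp_top[OF P d1, of "2 * ?d - (j - 1)"] j by simp
  qed
  have s1: "top_vertex A pt pb j = top_vertex A pt pb (j - 1) + side_vec pt pb (inv_into A pt j)"
    using tv_step[OF P d1] j by simp
  have s2: "top_vertex A pt pb (j + 1) = top_vertex A pt pb j + side_vec pt pb (inv_into A pt (j + 1))"
    using tv_step[OF P d1, of "j + 1"] j by simp
  have "corner_angle A pt pb ?k = Arg2pi ((top_vertex A pt pb (j + 1) - top_vertex A pt pb j) /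
      (top_vertex A pt pb (j - 1) - top_vertex A pt pb j))"
    unfolding corner_angle_def Let_def m1 v u w ..
  also have "\<dots> = Arg2pi (side_vec pt pb (inv_into A pt (j + 1)) / - side_vec pt pb (inv_into A pt j))"
    using s1 s2 by simp
  also have "\<dots> = th pt pb (inv_into A pt (j + 1)) + pi - th pt pb (inv_into A pt j)" by (rule R3)
  finally show ?thesis .
qed

lemma ca_0:
  shows "corner_angle A pt pb 0 = th pt pb (inv_into A pt 1) - th pt pb (inv_into A pb 1)"
proof -
  let ?d = "card A"
  have m1: "(0 + 2 * ?d - 1) mod (2 * ?d) = 2 * ?d - 1" using d1 by simp
  have m2: "(0 + 1) mod (2 * ?d) = 1" using d1 by simp
  have v: "corner_pos A pt pb 0 = 0" using cp_bot[OF P d1, of 0] bv_0[OF P d1] by simp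
  have u: "corner_pos A pt pb (2 * ?d - 1) = top_vertex A pt pb 1"
    using cp_top[OF P d1, of "2 * ?d - 1"] d1 by simp
  have w: "corner_pos A pt pb 1 = bot_vertex A pt pb 1" using cp_bot[OF P d1, of 1] d1 by simp
  have s1: "top_vertex A pt pb 1 = side_vec pt pb (inv_into A pt 1)"
    using tv_step[OF P d1, of 1] d1 tv_0[OF P d1] by simp
  have s2: "bot_vertex A pt pb 1 = side_vec pt pb (inv_into A pb 1)"
    using bv_step[OF P d1, of 1] d1 bv_0[OF P d1] by simp
  let ?a = "inv_into A pt 1" and ?b = "inv_into A pb 1"
  have a: "?a \<in> A" "pt ?a = 1" using inv_pt[OF P, of 1] d1 by auto
  have b: "?b \<in> A" "pb ?b = 1" using inv_pb[OF P, of 1] d1 by auto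
  have "pb ?a \<ge> 1" "pt ?b \<ge> 1" using pb_range[OF P a(1)] pt_range[OF P b(1)] by auto
  then have "th pt pb ?b \<le> 0" "0 \<le> th pt pb ?a" unfolding th_def using a(2) b(2) by auto
  then have le: "th pt pb ?b \<le> th pt pb ?a" by simp
  have "corner_angle A pt pb 0 = Arg2pi ((top_vertex A pt pb 1 - 0) / (bot_vertex A pt pb 1 - 0))"
    unfolding corner_angle_def Let_def m1 m2 v u w ..
  also have "\<dots> = Arg2pi (side_vec pt pb ?a / side_vec pt pb ?b)" using s1 s2 by simp
  also have "\<dots> = th pt pb ?a - th pt pb ?b" by (rule R1[OF le])
  finally show ?thesis .
qed

lemma ca_d:
  shows "corner_angle A pt pb (card A) = th pt pb (inv_into A pb (card A)) - th pt pb (inv_into A pt (card A))"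
proof -
  let ?d = "card A"
  have m1: "(?d + 2 * ?d - 1) mod (2 * ?d) = ?d - 1"
  proof -
    have e: "?d + 2 * ?d - 1 = (?d - 1) + 2 * ?d" using d1 by simp
    show ?thesis unfolding e by (rule modlem) (use d1 in simp)
  qed
  have v: "corner_pos A pt pb ?d = bot_vertex A pt pb ?d" using cp_bot[OF P d1] by simp
  have u: "corner_pos A pt pb (?d - 1) = bot_vertex A pt pb (?d - 1)" using cp_bot[OF P d1] by simp
  have w: "corner_pos A pt pb ((?d + 1) mod (2 * ?d)) = top_vertex A pt pb (?d - 1)"
  proof (cases "?d = 1")
    case True
    then have "(?d + 1) mod (2 * ?d) = 0" by simp
    then show ?thesis using cp_bot[OF P d1, of 0] bv_0[OF P d1] tv_0[OF P d1] True by simp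
  next
    case False
    then have "(?d + 1) mod (2 * ?d) = 2 * ?d - (?d - 1)" using d1 by simp
    then show ?thesis using cp_top[OF P d1, of "2 * ?d - (?d - 1)"] d1 by simp
  qed
  have s1: "bot_vertex A pt pb ?d = bot_vertex A pt pb (?d - 1) + side_vec pt pb (inv_into A pb ?d)"
    using bv_step[OF P d1] d1 by simp
  have s2: "top_vertex A pt pb ?d = top_vertex A pt pb (?d - 1) + side_vec pt pb (inv_into A pt ?d)"
    using tv_step[OF P d1] d1 by simp
  have s3: "bot_vertex A pt pb ?d = top_vertex A pt pb ?d" by (rule bv_tv_d[OF P d1])
  let ?a = "inv_into A pb ?d" and ?b = "inv_into A pt ?d"
  have a: "?a \<in> A" "pb ?a = ?d" using inv_pb[OF P, of ?d] d1 by auto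
  have b: "?b \<in> A" "pt ?b = ?d" using inv_pt[OF P, of ?d] d1 by auto
  have "pt ?a \<le> ?d" "pb ?b \<le> ?d" using pt_range[OF P a(1)] pb_range[OF P b(1)] by auto
  then have "th pt pb ?b \<le> 0" "0 \<le> th pt pb ?a" unfolding th_def using a(2) b(2) by auto
  then have le: "th pt pb ?b \<le> th pt pb ?a" by simp
  have "corner_angle A pt pb ?d = Arg2pi ((bot_vertex A pt pb (?d - 1) - bot_vertex A pt pb ?d) /
      (top_vertex A pt pb (?d - 1) - bot_vertex A pt pb ?d))"
    unfolding corner_angle_def Let_def m1 v u w ..
  also have "\<dots> = Arg2pi (- side_vec pt pb ?a / - side_vec pt pb ?b)"
  proof -
    have "bot_vertex A pt pb (?d - 1) - bot_vertex A pt pb ?d = - side_vec pt pb ?a" using s1 by simp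
    moreover have "top_vertex A pt pb (?d - 1) - bot_vertex A pt pb ?d = - side_vec pt pb ?b"
      using s2 s3 by simp
    ultimately show ?thesis by simp
  qed
  also have "\<dots> = th pt pb ?a - th pt pb ?b" by (rule R4[OF le])
  finally show ?thesis .
qed

end


definition cc :: "'a set \<Rightarrow> ('a \<Rightarrow> nat) \<Rightarrow> ('a \<Rightarrow> nat) \<Rightarrow> nat \<Rightarrow> real" where
  "cc A pt pb k =
     (\<Sum>a\<in>A. if top_corner A (pt a - 1) = k then th pt pb a else 0)
   - (\<Sum>a\<in>A. if top_corner A (pt a) = k then th pt pb a else 0)
   - (\<Sum>a\<in>A. if pb a - 1 = k then th pt pb a else 0)
   + (\<Sum>a\<in>A. if pb a = k then th pt pb a else 0)"

lemma sum_single: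
  assumes "finite A" "{a \<in> A. Pr a} = {x}"
  shows "(\<Sum>a\<in>A. if Pr a then f a else 0) = (f x :: real)"
proof -
  have "(\<Sum>a\<in>A. if Pr a then f a else 0) = (\<Sum>a\<in>{a \<in> A. Pr a}. f a)"
    using sum.inter_filter[OF assms(1), where P=Pr and g=f] by simp
  then show ?thesis using assms(2) by simp
qed

lemma sum_none:
  assumes "\<And>a. a \<in> A \<Longrightarrow> \<not> Pr a"
  shows "(\<Sum>a\<in>A. if Pr a then f a else 0) = (0 :: real)"
  using assms by (intro sum.neutral) auto

context
  fixes A :: "'a set" and pt pb :: "'a \<Rightarrow> nat"
  assumes P: "is_perm A pt pb" and d1: "1 \<le> card A"
begin

lemma set_pt: "1 \<le> i \<Longrightarrow> i \<le> card A \<Longrightarrow> {a \<in> A. pt a = i} = {inv_into A pt i}"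
  using inv_pt[OF P] inv_pt_eq[OF P] by fastforce

lemma set_pb: "1 \<le> i \<Longrightarrow> i \<le> card A \<Longrightarrow> {a \<in> A. pb a = i} = {inv_into A pb i}"
  using inv_pb[OF P] inv_pb_eq[OF P] by fastforce

lemma finA: "finite A" using perm_facts(1)[OF P] .

lemma tc_eq0: "x \<le> card A \<Longrightarrow> top_corner A x = 0 \<longleftrightarrow> x = 0"
  unfolding top_corner_def using d1 by auto

lemma tc_eqd: "x \<le> card A \<Longrightarrow> top_corner A x = card A \<longleftrightarrow> x = card A"
  unfolding top_corner_def using d1 by auto

lemma tc_eq_top: "x \<le> card A \<Longrightarrow> 1 \<le> j \<Longrightarrow> j < card A \<Longrightarrow> top_corner A x = 2 * card A - j \<longleftrightarrow> x = j"
  unfolding top_corner_def using d1 by auto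

lemma tc_ne_bot: "x \<le> card A \<Longrightarrow> 1 \<le> k \<Longrightarrow> k < card A \<Longrightarrow> top_corner A x \<noteq> k"
  unfolding top_corner_def using d1 by auto

lemma cc_0: "cc A pt pb 0 = th pt pb (inv_into A pt 1) - th pt pb (inv_into A pb 1)"
proof -
  have "{a \<in> A. top_corner A (pt a - 1) = 0} = {a \<in> A. pt a = 1}"
    using tc_eq0 pt_range[OF P] by fastforce
  then have s1: "(\<Sum>a\<in>A. if top_corner A (pt a - 1) = 0 then th pt pb a else 0) = th pt pb (inv_into A pt 1)"
    using sum_single[OF finA] set_pt[of 1] d1 by simp
  have s2: "(\<Sum>a\<in>A. if top_corner A (pt a) = 0 then th pt pb a else 0) = 0"
    by (rule sum_none) (use tc_eq0 pt_range[OF P] in fastforce)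
  have "{a \<in> A. pb a - 1 = 0} = {a \<in> A. pb a = 1}"
    using pb_range[OF P] by fastforce
  then have s3: "(\<Sum>a\<in>A. if pb a - 1 = 0 then th pt pb a else 0) = th pt pb (inv_into A pb 1)"
    using sum_single[OF finA] set_pb[of 1] d1 by simp
  have s4: "(\<Sum>a\<in>A. if pb a = 0 then th pt pb a else 0) = 0"
    by (rule sum_none) (use pb_range[OF P] in fastforce)
  show ?thesis unfolding cc_def s1 s2 s3 s4 by simp
qed

lemma cc_d: "cc A pt pb (card A) = th pt pb (inv_into A pb (card A)) - th pt pb (inv_into A pt (card A))"
proof -
  have s1: "(\<Sum>a\<in>A. if top_corner A (pt a - 1) = card A then th pt pb a else 0) = 0"
    by (rule sum_none) (use tc_eqd pt_range[OF P] in fastforce)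
  have "{a \<in> A. top_corner A (pt a) = card A} = {a \<in> A. pt a = card A}"
    using tc_eqd pt_range[OF P] by fastforce
  then have s2: "(\<Sum>a\<in>A. if top_corner A (pt a) = card A then th pt pb a else 0) = th pt pb (inv_into A pt (card A))"
    using sum_single[OF finA] set_pt[of "card A"] d1 by simp
  have s3: "(\<Sum>a\<in>A. if pb a - 1 = card A then th pt pb a else 0) = 0"
    by (rule sum_none) (use pb_range[OF P] d1 in fastforce)
  have s4: "(\<Sum>a\<in>A. if pb a = card A then th pt pb a else 0) = th pt pb (inv_into A pb (card A))"
    using sum_single[OF finA] set_pb[of "card A"] d1 by simp
  show ?thesis unfolding cc_def s1 s2 s3 s4 by simp
qed

lemma cc_bot:
  assumes k: "1 \<le> k" "k < card A"
  shows "cc A pt pb k = th pt pb (inv_into A pb k) - th pt pb (inv_into A pb (k + 1))"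
proof -
  have s1: "(\<Sum>a\<in>A. if top_corner A (pt a - 1) = k then th pt pb a else 0) = 0"
  proof (rule sum_none)
    fix a assume "a \<in> A"
    then have "pt a - 1 \<le> card A" using pt_range[OF P] by fastforce
    then show "top_corner A (pt a - 1) \<noteq> k" by (rule tc_ne_bot[OF _ k])
  qed
  have s2: "(\<Sum>a\<in>A. if top_corner A (pt a) = k then th pt pb a else 0) = 0"
  proof (rule sum_none)
    fix a assume "a \<in> A"
    then have "pt a \<le> card A" using pt_range[OF P] by fastforce
    then show "top_corner A (pt a) \<noteq> k" by (rule tc_ne_bot[OF _ k])
  qed
  have "{a \<in> A. pb a - 1 = k} = {a \<in> A. pb a = k + 1}"
    using pb_range[OF P] k by fastforce
  then have s3: "(\<Sum>a\<in>A. if pb a - 1 = k then th pt pb a else 0) = th pt pb (inv_into A pb (k + 1))"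
    using sum_single[OF finA] set_pb[of "k + 1"] k by simp
  have s4: "(\<Sum>a\<in>A. if pb a = k then th pt pb a else 0) = th pt pb (inv_into A pb k)"
    using sum_single[OF finA] set_pb[of k] k by simp
  show ?thesis unfolding cc_def s1 s2 s3 s4 by simp
qed

lemma cc_top:
  assumes j: "1 \<le> j" "j < card A"
  shows "cc A pt pb (2 * card A - j) = th pt pb (inv_into A pt (j + 1)) - th pt pb (inv_into A pt j)"
proof -
  have "{a \<in> A. top_corner A (pt a - 1) = 2 * card A - j} = {a \<in> A. pt a = j + 1}"
    using tc_eq_top[OF _ j] pt_range[OF P] by fastforce
  then have s1: "(\<Sum>a\<in>A. if top_corner A (pt a - 1) = 2 * card A - j then th pt pb a else 0) = th pt pb (inv_into A pt (j + 1))"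
    using sum_single[OF finA] set_pt[of "j + 1"] j by simp
  have "{a \<in> A. top_corner A (pt a) = 2 * card A - j} = {a \<in> A. pt a = j}"
    using tc_eq_top[OF _ j] pt_range[OF P] by fastforce
  then have s2: "(\<Sum>a\<in>A. if top_corner A (pt a) = 2 * card A - j then th pt pb a else 0) = th pt pb (inv_into A pt j)"
    using sum_single[OF finA] set_pt[of j] j by simp
  have s3: "(\<Sum>a\<in>A. if pb a - 1 = 2 * card A - j then th pt pb a else 0) = 0"
    by (rule sum_none) (use pb_range[OF P] j in fastforce)
  have s4: "(\<Sum>a\<in>A. if pb a = 2 * card A - j then th pt pb a else 0) = 0"
    by (rule sum_none) (use pb_range[OF P] j in fastforce)
  show ?thesis unfolding cc_def s1 s2 s3 s4 by simp
qed

lemma ca_cc: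
  assumes k: "k < 2 * card A"
  shows "corner_angle A pt pb k = (if k = 0 \<or> k = card A then 0 else pi) + cc A pt pb k"
proof -
  consider "k = 0" | "1 \<le> k \<and> k < card A" | "k = card A" | "card A < k" by linarith
  then show ?thesis
  proof cases
    case 1
    then show ?thesis using ca_0[OF P d1] cc_0 by simp
  next
    case 2
    then show ?thesis using ca_bot[OF P d1, of k] cc_bot[of k] by simp
  next
    case 3
    then show ?thesis using ca_d[OF P d1] cc_d d1 by simp
  next
    case 4
    define j where "j = 2 * card A - k"
    have j: "1 \<le> j" "j < card A" using 4 k unfolding j_def by auto
    have kj: "k = 2 * card A - j" using 4 k unfolding j_def by auto
    show ?thesis unfolding kj using ca_top[OF P d1 j] cc_top[OF j] j by simp
  qed
qed

end


lemma swap_delta: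
  assumes "finite C" "finite A"
  shows "(\<Sum>k\<in>C. \<Sum>a\<in>A. if f a = k then g a else (0::real)) = (\<Sum>a\<in>A. if f a \<in> C then g a else 0)"
proof -
  have "(\<Sum>k\<in>C. \<Sum>a\<in>A. if f a = k then g a else (0::real)) = (\<Sum>a\<in>A. \<Sum>k\<in>C. if f a = k then g a else 0)"
    by (rule sum.swap)
  also have "\<dots> = (\<Sum>a\<in>A. if f a \<in> C then g a else 0)"
    by (rule sum.cong) (use assms(1) in \<open>simp_all add: sum.delta'\<close>)
  finally show ?thesis .
qed

context
  fixes A :: "'a set" and pt pb :: "'a \<Rightarrow> nat"
  assumes P: "is_perm A pt pb" and d1: "1 \<le> card A"
begin

lemma class_cc_zero:
  assumes C: "C = vertex_equiv A pt pb `` {x}" and fC: "finite C"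
  shows "(\<Sum>k\<in>C. cc A pt pb k) = 0"
proof -
  have fA: "finite A" using perm_facts(1)[OF P] .
  have cl1: "\<And>a. a \<in> A \<Longrightarrow> top_corner A (pt a - 1) \<in> C \<longleftrightarrow> pb a - 1 \<in> C"
  proof -
    fix a assume a: "a \<in> A"
    have "(top_corner A (pt a - 1), pb a - 1) \<in> glue_rel A pt pb"
      unfolding glue_rel_def bot_corner_def using a by blast
    then have e: "(top_corner A (pt a - 1), pb a - 1) \<in> vertex_equiv A pt pb" by (rule ve_glue)
    show "top_corner A (pt a - 1) \<in> C \<longleftrightarrow> pb a - 1 \<in> C"
      unfolding C using ve_trans[OF _ e] ve_trans[OF _ ve_sym[OF e]] by blast
  qed
  have cl2: "\<And>a. a \<in> A \<Longrightarrow> top_corner A (pt a) \<in> C \<longleftrightarrow> pb a \<in> C"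
  proof -
    fix a assume a: "a \<in> A"
    have "(top_corner A (pt a), pb a) \<in> glue_rel A pt pb"
      unfolding glue_rel_def bot_corner_def using a by blast
    then have e: "(top_corner A (pt a), pb a) \<in> vertex_equiv A pt pb" by (rule ve_glue)
    show "top_corner A (pt a) \<in> C \<longleftrightarrow> pb a \<in> C"
      unfolding C using ve_trans[OF _ e] ve_trans[OF _ ve_sym[OF e]] by blast
  qed
  have "(\<Sum>k\<in>C. cc A pt pb k) =
      (\<Sum>k\<in>C. \<Sum>a\<in>A. if top_corner A (pt a - 1) = k then th pt pb a else 0)
    - (\<Sum>k\<in>C. \<Sum>a\<in>A. if top_corner A (pt a) = k then th pt pb a else 0)
    - (\<Sum>k\<in>C. \<Sum>a\<in>A. if pb a - 1 = k then th pt pb a else 0)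
    + (\<Sum>k\<in>C. \<Sum>a\<in>A. if pb a = k then th pt pb a else 0)"
    unfolding cc_def by (simp add: sum.distrib sum_subtractf)
  also have "\<dots> =
      (\<Sum>a\<in>A. if top_corner A (pt a - 1) \<in> C then th pt pb a else 0)
    - (\<Sum>a\<in>A. if top_corner A (pt a) \<in> C then th pt pb a else 0)
    - (\<Sum>a\<in>A. if pb a - 1 \<in> C then th pt pb a else 0)
    + (\<Sum>a\<in>A. if pb a \<in> C then th pt pb a else 0)"
    unfolding swap_delta[OF fC fA] ..
  also have "(\<Sum>a\<in>A. if top_corner A (pt a - 1) \<in> C then th pt pb a else 0) =
       (\<Sum>a\<in>A. if pb a - 1 \<in> C then th pt pb a else 0)"
    by (rule sum.cong) (use cl1 in auto)
  also have "(\<Sum>a\<in>A. if top_corner A (pt a) \<in> C then th pt pb a else 0) =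
       (\<Sum>a\<in>A. if pb a \<in> C then th pt pb a else 0)"
    by (rule sum.cong) (use cl2 in auto)
  finally show ?thesis by simp
qed

lemma class_angle_gen:
  assumes C: "C = vertex_equiv A pt pb `` {x}" and fC: "finite C" and Cs: "C \<subseteq> {..<2 * card A}"
  shows "class_angle A pt pb C = pi * card (C - {0, card A})"
proof -
  have "class_angle A pt pb C = (\<Sum>k\<in>C. (if k = 0 \<or> k = card A then 0 else pi) + cc A pt pb k)"
    unfolding class_angle_def by (rule sum.cong) (use Cs ca_cc[OF P d1] in auto)
  also have "\<dots> = (\<Sum>k\<in>C. if k = 0 \<or> k = card A then 0 else pi)"
    using class_cc_zero[OF C fC] by (simp add: sum.distrib)
  also have "\<dots> = (\<Sum>k\<in>C. if \<not> (k = 0 \<or> k = card A) then pi else 0)"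
    by (rule sum.cong) auto
  also have "\<dots> = (\<Sum>k\<in>{k \<in> C. \<not> (k = 0 \<or> k = card A)}. pi)"
    using sum.inter_filter[OF fC, where P="\<lambda>k. \<not> (k = 0 \<or> k = card A)" and g="\<lambda>k. pi"] by simp
  also have "{k \<in> C. \<not> (k = 0 \<or> k = card A)} = C - {0, card A}" by auto
  finally show ?thesis by simp
qed

lemma class_angle_orb:
  assumes j: "j \<le> card A"
  shows "class_angle A pt pb (cls A pt pb (orb (tauf A pt pb) j)) = 2 * pi * card (orb (tauf A pt pb) j - {0, card A})"
proof -
  let ?Q = "orb (tauf A pt pb) j"
  have Qs: "?Q \<subseteq> {..card A}" using orb_closed(1)[OF P d1 j] .
  have Cs: "cls A pt pb ?Q \<subseteq> {..<2 * card A}"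
  proof
    fix c assume "c \<in> cls A pt pb ?Q"
    then obtain i where i: "i \<in> ?Q" "c = top_corner A i \<or> c = lamf A pt pb i" unfolding cls_def by blast
    have il: "i \<le> card A" using i(1) Qs by auto
    have "top_corner A i < 2 * card A" using tc_lt[OF il d1] .
    moreover have "lamf A pt pb i \<le> card A" using lam_maps[OF P] il by auto
    ultimately show "c \<in> {..<2 * card A}" using i(2) d1 by auto
  qed
  have fC: "finite (cls A pt pb ?Q)" using Cs finite_subset by blast
  have "class_angle A pt pb (cls A pt pb ?Q) = pi * card (cls A pt pb ?Q - {0, card A})"
    by (rule class_angle_gen[OF class_eq[OF P d1 j, symmetric] fC Cs])
  also have "\<dots> = pi * (2 * card (?Q - {0, card A}))" using card_cls[OF P d1 j] by simp
  finally show ?thesis by simp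
qed

end


section \<open>Stratum in terms of orbits\<close>

definition orbs :: "'a set \<Rightarrow> ('a \<Rightarrow> nat) \<Rightarrow> ('a \<Rightarrow> nat) \<Rightarrow> nat set set" where
  "orbs A pt pb = (\<lambda>j. orb (tauf A pt pb) j) ` {..card A}"

definition wt :: "nat \<Rightarrow> nat set \<Rightarrow> nat" where
  "wt d Q = card (Q - {0, d})"

definition orb_stratum :: "'a set \<Rightarrow> ('a \<Rightarrow> nat) \<Rightarrow> ('a \<Rightarrow> nat) \<Rightarrow> nat list \<Rightarrow> bool" where
  "orb_stratum A pt pb ms \<longleftrightarrow>
     (\<exists>g. bij_betw g {Q \<in> orbs A pt pb. wt (card A) Q \<noteq> 1} {..<length ms} \<and>
          (\<forall>Q \<in> {Q \<in> orbs A pt pb. wt (card A) Q \<noteq> 1}. wt (card A) Q = ms ! (g Q) + 1))"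

context
  fixes A :: "'a set" and pt pb :: "'a \<Rightarrow> nat"
  assumes P: "is_perm A pt pb" and d1: "1 \<le> card A"
begin

lemma cls_inj: "inj_on (cls A pt pb) (orbs A pt pb)"
proof (rule inj_onI)
  fix Q1 Q2 assume q1: "Q1 \<in> orbs A pt pb" and q2: "Q2 \<in> orbs A pt pb" and e: "cls A pt pb Q1 = cls A pt pb Q2"
  obtain j1 where j1: "j1 \<le> card A" "Q1 = orb (tauf A pt pb) j1" using q1 unfolding orbs_def by auto
  obtain j2 where j2: "j2 \<le> card A" "Q2 = orb (tauf A pt pb) j2" using q2 unfolding orbs_def by auto
  have s1: "Q1 \<subseteq> {..card A}" using orb_closed(1)[OF P d1 j1(1)] j1(2) by simp
  have s2: "Q2 \<subseteq> {..card A}" using orb_closed(1)[OF P d1 j2(1)] j2(2) by simp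
  have m1: "\<And>x. x \<le> card A \<Longrightarrow> top_corner A x \<in> cls A pt pb Q1 \<longleftrightarrow> x \<in> Q1"
    using tc_in_cls[OF P d1 s1] orb_closed(2)[OF P d1 j1(1)] j1(2) by blast
  have m2: "\<And>x. x \<le> card A \<Longrightarrow> top_corner A x \<in> cls A pt pb Q2 \<longleftrightarrow> x \<in> Q2"
    using tc_in_cls[OF P d1 s2] orb_closed(2)[OF P d1 j2(1)] j2(2) by blast
  show "Q1 = Q2"
  proof
    show "Q1 \<subseteq> Q2" using s1 m1 m2 e by blast
    show "Q2 \<subseteq> Q1" using s2 m1 m2 e by blast
  qed
qed

lemma stratum_iff: "in_stratum A pt pb ms \<longleftrightarrow> orb_stratum A pt pb ms"
proof -
  let ?O = "{Q \<in> orbs A pt pb. wt (card A) Q \<noteq> 1}"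
  let ?V = "{C \<in> vertex_classes A pt pb. class_angle A pt pb C \<noteq> 2 * pi}"
  let ?F = "cls A pt pb"
  have ang: "\<And>Q. Q \<in> orbs A pt pb \<Longrightarrow> class_angle A pt pb (?F Q) = 2 * pi * wt (card A) Q"
    unfolding orbs_def wt_def using class_angle_orb[OF P d1] by auto
  have VC: "vertex_classes A pt pb = ?F ` orbs A pt pb"
    unfolding orbs_def using vclasses[OF P d1] by (simp add: image_image)
  have V: "?V = ?F ` ?O"
  proof
    show "?V \<subseteq> ?F ` ?O"
    proof
      fix C assume C: "C \<in> ?V"
      then obtain Q where Q: "Q \<in> orbs A pt pb" "C = ?F Q" using VC by auto
      have "2 * pi * wt (card A) Q \<noteq> 2 * pi" using C Q ang by auto
      then have "wt (card A) Q \<noteq> 1" by auto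
      then show "C \<in> ?F ` ?O" using Q by auto
    qed
    show "?F ` ?O \<subseteq> ?V"
    proof
      fix C assume "C \<in> ?F ` ?O"
      then obtain Q where Q: "Q \<in> orbs A pt pb" "wt (card A) Q \<noteq> 1" "C = ?F Q" by auto
      have "real (wt (card A) Q) \<noteq> 1" using Q(2) by simp
      then have "2 * pi * wt (card A) Q \<noteq> 2 * pi" by simp
      then show "C \<in> ?V" using Q ang VC by auto
    qed
  qed
  have bF: "bij_betw ?F ?O ?V"
    unfolding V by (rule inj_on_imp_bij_betw, rule inj_on_subset[OF cls_inj]) auto
  have angO: "\<And>Q m. Q \<in> ?O \<Longrightarrow> class_angle A pt pb (?F Q) = 2 * pi * (real m + 1) \<longleftrightarrow> wt (card A) Q = m + 1"
  proof -
    fix Q m assume "Q \<in> ?O"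
    then have "class_angle A pt pb (?F Q) = 2 * pi * wt (card A) Q" using ang by auto
    moreover have "2 * pi * real (wt (card A) Q) = 2 * pi * (real m + 1) \<longleftrightarrow> real (wt (card A) Q) = real m + 1"
      by simp
    ultimately show "class_angle A pt pb (?F Q) = 2 * pi * (real m + 1) \<longleftrightarrow> wt (card A) Q = m + 1"
      by linarith
  qed
  show ?thesis
  proof
    assume "in_stratum A pt pb ms"
    then obtain f where f: "bij_betw f ?V {..<length ms}"
      "\<forall>C\<in>?V. class_angle A pt pb C = 2 * pi * (real (ms ! f C) + 1)"
      unfolding in_stratum_def by blast
    have "bij_betw (f \<circ> ?F) ?O {..<length ms}" by (rule bij_betw_trans[OF bF f(1)])
    moreover have "\<forall>Q\<in>?O. wt (card A) Q = ms ! ((f \<circ> ?F) Q) + 1"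
    proof
      fix Q assume Q: "Q \<in> ?O"
      have "?F Q \<in> ?V" using bF Q by (auto simp: bij_betw_def)
      then have "class_angle A pt pb (?F Q) = 2 * pi * (real (ms ! f (?F Q)) + 1)" using f(2) by blast
      then have "wt (card A) Q = ms ! f (?F Q) + 1" using angO[OF Q] by blast
      then show "wt (card A) Q = ms ! ((f \<circ> ?F) Q) + 1" unfolding comp_def .
    qed
    ultimately show "orb_stratum A pt pb ms" unfolding orb_stratum_def by blast
  next
    assume "orb_stratum A pt pb ms"
    then obtain g where g: "bij_betw g ?O {..<length ms}" "\<forall>Q\<in>?O. wt (card A) Q = ms ! (g Q) + 1"
      unfolding orb_stratum_def by blast
    let ?G = "the_inv_into ?O ?F"
    have bG: "bij_betw ?G ?V ?O" by (rule bij_betw_the_inv_into[OF bF])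
    have "bij_betw (g \<circ> ?G) ?V {..<length ms}" by (rule bij_betw_trans[OF bG g(1)])
    moreover have "\<forall>C\<in>?V. class_angle A pt pb C = 2 * pi * (real (ms ! ((g \<circ> ?G) C)) + 1)"
    proof
      fix C assume C: "C \<in> ?V"
      then obtain Q where Q: "Q \<in> ?O" "C = ?F Q" using V by auto
      have "?G C = Q" unfolding Q(2) by (rule the_inv_into_f_f[OF _ Q(1)]) (use bF in \<open>simp add: bij_betw_def\<close>)
      have "wt (card A) Q = ms ! (g Q) + 1" using g(2) Q(1) by blast
      then have "class_angle A pt pb (?F Q) = 2 * pi * (real (ms ! (g Q)) + 1)" using angO[OF Q(1)] by blast
      moreover have gc: "(g \<circ> ?G) (?F Q) = g Q" using \<open>?G C = Q\<close> Q(2) by simp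
      ultimately show "class_angle A pt pb C = 2 * pi * (real (ms ! ((g \<circ> ?G) C)) + 1)"
        unfolding Q(2) gc by simp
    qed
    ultimately show "in_stratum A pt pb ms" unfolding in_stratum_def by blast
  qed
qed

end


section \<open>Insertion\<close>

definition rr :: "nat \<Rightarrow> nat \<Rightarrow> nat" where
  "rr p j = (if j < p then j else j + 1)"

lemma rr_inj: "inj (rr p)"
  unfolding rr_def by (rule injI) (auto split: if_splits)

lemma rr_ne: "rr p j \<noteq> p"
  unfolding rr_def by auto

lemma ib_new: "insert_before f a' c a' = f c"
  unfolding insert_before_def by simp

lemma ib_old: "x \<noteq> a' \<Longrightarrow> insert_before f a' c x = rr (f c) (f x)"
  unfolding insert_before_def rr_def by auto

lemma ins_bij:
  assumes bij: "bij_betw f A {1..card A}" and fin: "finite A" and c: "c \<in> A" and a': "a' \<notin> A"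
  shows "bij_betw (insert_before f a' c) (insert a' A) {1..card (insert a' A)}"
proof -
  let ?g = "insert_before f a' c"
  have cA: "card (insert a' A) = card A + 1" using fin a' by simp
  have fr: "\<And>x. x \<in> A \<Longrightarrow> 1 \<le> f x \<and> f x \<le> card A" using bij unfolding bij_betw_def by auto
  have injf: "inj_on f A" using bij unfolding bij_betw_def by auto
  have inj: "inj_on ?g (insert a' A)"
  proof (rule inj_onI)
    fix x y assume x: "x \<in> insert a' A" and y: "y \<in> insert a' A" and e: "?g x = ?g y"
    show "x = y"
    proof (cases "x = a'")
      case True
      show ?thesis
      proof (rule ccontr)
        assume "x \<noteq> y"
        then have "y \<noteq> a'" "y \<in> A" using True y by auto
        then have "?g y = rr (f c) (f y)" by (simp add: ib_old)
        moreover have "?g x = f c" using True by (simp add: ib_new)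
        ultimately show False using e rr_ne by metis
      qed
    next
      case xn: False
      show ?thesis
      proof (cases "y = a'")
        case True
        have "x \<in> A" using xn x by auto
        have "?g x = rr (f c) (f x)" using xn by (simp add: ib_old)
        moreover have "?g y = f c" using True by (simp add: ib_new)
        ultimately show ?thesis using e rr_ne by metis
      next
        case False
        have "rr (f c) (f x) = rr (f c) (f y)" using e xn False by (simp add: ib_old)
        then have "f x = f y" using rr_inj by (metis injD)
        then show ?thesis using injf x y xn False by (auto simp: inj_on_def)
      qed
    qed
  qed
  have sub: "?g ` insert a' A \<subseteq> {1..card A + 1}"
  proof
    fix z assume "z \<in> ?g ` insert a' A"
    then obtain x where x: "x \<in> insert a' A" "z = ?g x" by auto
    show "z \<in> {1..card A + 1}"
    proof (cases "x = a'")
      case True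
      then show ?thesis using x fr[OF c] by (simp add: ib_new)
    next
      case False
      then have xA: "x \<in> A" using x by auto
      have z: "z = rr (f c) (f x)" using x False by (simp add: ib_old)
      show ?thesis using fr[OF xA] unfolding z rr_def by auto
    qed
  qed
  have "card (?g ` insert a' A) = card A + 1" using card_image[OF inj] cA by simp
  then have "?g ` insert a' A = {1..card A + 1}"
    using card_subset_eq[OF _ sub] by simp
  then show ?thesis using inj cA unfolding bij_betw_def by simp
qed


context
  fixes A :: "'a set" and pt pb :: "'a \<Rightarrow> nat" and a' b b' :: 'a
  assumes P: "is_perm A pt pb" and d1: "1 \<le> card A" and a': "a' \<notin> A"
    and b: "b \<in> A" and b': "b' \<in> A" and bb: "b \<noteq> b'"
begin

abbreviation "A2 \<equiv> insert a' A"
abbreviation "pt2 \<equiv> insert_before pt a' b"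
abbreviation "pb2 \<equiv> insert_before pb a' b'"

lemma cA2: "card A2 = card A + 1"
  using a' perm_facts(1)[OF P] by simp

lemma P2: "is_perm A2 pt2 pb2"
  unfolding is_perm_def
  using ins_bij[of pt A b a'] ins_bij[of pb A b' a'] P b b' a' perm_facts(1)[OF P]
  unfolding is_perm_def by auto

lemma pt2_old: "x \<in> A \<Longrightarrow> pt2 x = rr (pt b) (pt x)"
  using a' by (auto intro: ib_old)

lemma pb2_old: "x \<in> A \<Longrightarrow> pb2 x = rr (pb b') (pb x)"
  using a' by (auto intro: ib_old)

lemma pt2_new: "pt2 a' = pt b" by (rule ib_new)
lemma pb2_new: "pb2 a' = pb b'" by (rule ib_new)

lemma tinv2_old: "x \<in> A \<Longrightarrow> inv_into A2 pt2 (rr (pt b) (pt x)) = x"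
  using inv_pt_eq[OF P2, of x] pt2_old[of x] by simp

lemma tinv2_new: "inv_into A2 pt2 (pt b) = a'"
  using inv_pt_eq[OF P2, of a'] pt2_new by simp

lemma binv2_old: "x \<in> A \<Longrightarrow> inv_into A2 pb2 (rr (pb b') (pb x)) = x"
  using inv_pb_eq[OF P2, of x] pb2_old[of x] by simp

lemma binv2_new: "inv_into A2 pb2 (pb b') = a'"
  using inv_pb_eq[OF P2, of a'] pb2_new by simp

lemma p_range: "1 \<le> pt b" "pt b \<le> card A" using pt_range[OF P b] by auto
lemma q_range: "1 \<le> pb b'" "pb b' \<le> card A" using pb_range[OF P b'] by auto

lemma rr_d: "rr (pt b) (card A) = card A + 1"
  using p_range unfolding rr_def by auto

lemma rr_0: "rr (pt b) 0 = 0" using p_range unfolding rr_def by auto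

lemma lam2_gen:
  assumes j: "j < card A" "j \<noteq> pt b - 1" "j \<noteq> pt b' - 1"
  shows "lamf A2 pt2 pb2 (rr (pt b) j) = rr (pb b') (lamf A pt pb j)"
proof -
  define x where "x = inv_into A pt (j + 1)"
  have x: "x \<in> A" "pt x = j + 1" using inv_pt[OF P, of "j+1"] j(1) unfolding x_def by auto
  have e1: "rr (pt b) j + 1 = rr (pt b) (pt x)" using x(2) j(2) p_range unfolding rr_def by auto
  have lt: "rr (pt b) j < card A2" using j(1) cA2 unfolding rr_def by auto
  have "lamf A2 pt2 pb2 (rr (pt b) j) = pb2 (inv_into A2 pt2 (rr (pt b) j + 1)) - 1"
    using lt unfolding lamf_def by simp
  also have "\<dots> = pb2 x - 1" unfolding e1 tinv2_old[OF x(1)] ..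
  also have "\<dots> = rr (pb b') (pb x) - 1" using pb2_old[OF x(1)] by simp
  also have "\<dots> = rr (pb b') (pb x - 1)"
  proof -
    have "x \<noteq> b'" using x(2) j(3) by auto
    then have "pb x \<noteq> pb b'" using inj_onD[OF perm_facts(3)[OF P]] x(1) b' by blast
    moreover have "1 \<le> pb x" using pb_range[OF P x(1)] by simp
    ultimately show ?thesis unfolding rr_def by auto
  qed
  also have "pb x - 1 = lamf A pt pb j" using j(1) unfolding lamf_def x_def by simp
  finally show ?thesis .
qed

lemma lam2_d: "lamf A2 pt2 pb2 (rr (pt b) (card A)) = rr (pb b') (lamf A pt pb (card A))"
proof -
  have "lamf A2 pt2 pb2 (rr (pt b) (card A)) = card A + 1"
    unfolding rr_d lamf_def cA2 by simp
  moreover have "rr (pb b') (lamf A pt pb (card A)) = card A + 1"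
    unfolding lam_d[OF P] rr_def using q_range by auto
  ultimately show ?thesis by simp
qed

lemma lam2_J: "lamf A2 pt2 pb2 (rr (pt b) (pt b' - 1)) = pb b'"
proof -
  let ?J = "pt b' - 1"
  have pb': "1 \<le> pt b'" "pt b' \<le> card A" using pt_range[OF P b'] by auto
  have neq: "pt b' \<noteq> pt b" using inj_onD[OF perm_facts(2)[OF P]] b b' bb by metis
  have e1: "rr (pt b) ?J + 1 = rr (pt b) (pt b')" using neq pb' p_range unfolding rr_def by auto
  have lt: "rr (pt b) ?J < card A2" using pb' cA2 unfolding rr_def by auto
  have "lamf A2 pt2 pb2 (rr (pt b) ?J) = pb2 (inv_into A2 pt2 (rr (pt b) ?J + 1)) - 1"
    using lt unfolding lamf_def by simp
  also have "\<dots> = pb2 b' - 1" unfolding e1 tinv2_old[OF b'] ..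
  also have "\<dots> = pb b'" using pb2_old[OF b'] unfolding rr_def by simp
  finally show ?thesis .
qed

lemma lam2_s: "lamf A2 pt2 pb2 (pt b - 1) = pb b' - 1"
proof -
  have lt: "pt b - 1 < card A2" using p_range cA2 by auto
  have e: "pt b - 1 + 1 = pt b" using p_range by simp
  have "lamf A2 pt2 pb2 (pt b - 1) = pb2 (inv_into A2 pt2 (pt b)) - 1"
    using lt e unfolding lamf_def by simp
  also have "\<dots> = pb b' - 1" unfolding tinv2_new pb2_new ..
  finally show ?thesis .
qed

lemma lam2_N: "lamf A2 pt2 pb2 (pt b) = rr (pb b') (lamf A pt pb (pt b - 1))"
proof -
  have lt: "pt b < card A2" using p_range cA2 by auto
  have e1: "pt b + 1 = rr (pt b) (pt b)" unfolding rr_def by simp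
  have "lamf A2 pt2 pb2 (pt b) = pb2 (inv_into A2 pt2 (pt b + 1)) - 1"
    using lt unfolding lamf_def by simp
  also have "\<dots> = pb2 b - 1" unfolding e1 tinv2_old[OF b] ..
  also have "\<dots> = rr (pb b') (pb b) - 1" using pb2_old[OF b] by simp
  also have "\<dots> = rr (pb b') (pb b - 1)"
  proof -
    have "pb b \<noteq> pb b'" using inj_onD[OF perm_facts(3)[OF P]] b b' bb by metis
    moreover have "1 \<le> pb b" using pb_range[OF P b] by simp
    ultimately show ?thesis unfolding rr_def by auto
  qed
  also have "pb b - 1 = lamf A pt pb (pt b - 1)"
  proof -
    have "pt b - 1 < card A" "pt b - 1 + 1 = pt b" using p_range by auto
    then show ?thesis unfolding lamf_def using inv_pt_eq[OF P b] by simp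
  qed
  finally show ?thesis .
qed

lemma mu2_gen:
  assumes k: "k \<le> card A"
  shows "muf A2 pt2 pb2 (rr (pb b') k) = rr (pt b) (muf A pt pb k)"
proof (cases "k = 0")
  case True
  have "rr (pb b') k = 0" using True q_range unfolding rr_def by auto
  then show ?thesis using True mu_0[OF P] mu_0[OF P2] rr_0 by simp
next
  case False
  define y where "y = inv_into A pb k"
  have y: "y \<in> A" "pb y = k" using inv_pb[OF P, of k] False k unfolding y_def by auto
  have ne: "rr (pb b') k \<noteq> 0" using False unfolding rr_def by auto
  have "muf A2 pt2 pb2 (rr (pb b') k) = pt2 (inv_into A2 pb2 (rr (pb b') k))"
    using ne unfolding muf_def by simp
  also have "\<dots> = pt2 y" using binv2_old[OF y(1)] y(2) by simp
  also have "\<dots> = rr (pt b) (pt y)" using pt2_old[OF y(1)] .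
  also have "pt y = muf A pt pb k" using False unfolding muf_def y_def by simp
  finally show ?thesis .
qed

lemma mu2_q: "muf A2 pt2 pb2 (pb b') = pt b"
proof -
  have "muf A2 pt2 pb2 (pb b') = pt2 (inv_into A2 pb2 (pb b'))"
    using q_range unfolding muf_def by simp
  also have "\<dots> = pt b" unfolding binv2_new pt2_new ..
  finally show ?thesis .
qed

lemma rr_q1: "rr (pb b') (pb b' - 1) = pb b' - 1"
  using q_range unfolding rr_def by auto

lemma lam_J: "lamf A pt pb (pt b' - 1) = pb b' - 1"
proof -
  have "pt b' - 1 < card A" "pt b' - 1 + 1 = pt b'" using pt_range[OF P b'] by auto
  then show ?thesis unfolding lamf_def using inv_pt_eq[OF P b'] by simp
qed

lemma tau2_gen:
  assumes j: "j \<le> card A" "j \<noteq> pt b - 1" "j \<noteq> pt b' - 1"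
  shows "tauf A2 pt2 pb2 (rr (pt b) j) = rr (pt b) (tauf A pt pb j)"
proof -
  have l: "lamf A2 pt2 pb2 (rr (pt b) j) = rr (pb b') (lamf A pt pb j)"
  proof (cases "j < card A")
    case True
    then show ?thesis using lam2_gen j by blast
  next
    case False
    then have "j = card A" using j(1) by simp
    then show ?thesis using lam2_d by simp
  qed
  have "lamf A pt pb j \<le> card A" using lam_maps[OF P] j(1) by auto
  then show ?thesis unfolding tauf_def l using mu2_gen by blast
qed

lemma tau2_J: "tauf A2 pt2 pb2 (rr (pt b) (pt b' - 1)) = pt b"
  unfolding tauf_def lam2_J mu2_q ..

lemma tau2_s: "tauf A2 pt2 pb2 (rr (pt b) (pt b - 1)) = rr (pt b) (tauf A pt pb (pt b' - 1))"
proof -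
  have e: "rr (pt b) (pt b - 1) = pt b - 1" using p_range unfolding rr_def by auto
  have "tauf A2 pt2 pb2 (rr (pt b) (pt b - 1)) = muf A2 pt2 pb2 (rr (pb b') (pb b' - 1))"
    unfolding tauf_def e lam2_s rr_q1 ..
  also have "\<dots> = rr (pt b) (muf A pt pb (pb b' - 1))" using mu2_gen q_range by simp
  also have "\<dots> = rr (pt b) (tauf A pt pb (pt b' - 1))" unfolding tauf_def lam_J ..
  finally show ?thesis .
qed

lemma tau2_N: "tauf A2 pt2 pb2 (pt b) = rr (pt b) (tauf A pt pb (pt b - 1))"
proof -
  have "pt b - 1 \<le> card A" using p_range by simp
  then have "lamf A pt pb (pt b - 1) \<le> card A" using lam_maps[OF P] by auto
  then show ?thesis unfolding tauf_def lam2_N using mu2_gen by blast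
qed

end


lemma orb_periodic1:
  assumes "(f ^^ m) x = x" "m > 0"
  shows "orb f x = (\<lambda>n. (f ^^ n) x) ` {1..m}"
proof -
  have "(\<lambda>n. (f ^^ n) x) ` {..<m} = (\<lambda>n. (f ^^ n) x) ` {1..m}"
  proof
    show "(\<lambda>n. (f ^^ n) x) ` {..<m} \<subseteq> (\<lambda>n. (f ^^ n) x) ` {1..m}"
    proof
      fix y assume "y \<in> (\<lambda>n. (f ^^ n) x) ` {..<m}"
      then obtain i where i: "i < m" "y = (f ^^ i) x" by auto
      show "y \<in> (\<lambda>n. (f ^^ n) x) ` {1..m}"
      proof (cases "i = 0")
        case True
        then have "y = (f ^^ m) x" using i assms(1) by simp
        then show ?thesis using assms(2) by auto
      next
        case False
        then show ?thesis using i by auto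
      qed
    qed
    show "(\<lambda>n. (f ^^ n) x) ` {1..m} \<subseteq> (\<lambda>n. (f ^^ n) x) ` {..<m}"
    proof
      fix y assume "y \<in> (\<lambda>n. (f ^^ n) x) ` {1..m}"
      then obtain i where i: "1 \<le> i" "i \<le> m" "y = (f ^^ i) x" by auto
      show "y \<in> (\<lambda>n. (f ^^ n) x) ` {..<m}"
      proof (cases "i = m")
        case True
        then have "y = (f ^^ 0) x" using i assms(1) by simp
        then show ?thesis using assms(2) by blast
      next
        case False
        then show ?thesis using i by auto
      qed
    qed
  qed
  then show ?thesis using orb_periodic[OF assms] by simp
qed

lemma min_period:
  assumes "finite S" "inj_on f S" "f ` S \<subseteq> S" "x \<in> S"
  obtains n where "n > 0" "(f ^^ n) x = x"
    "\<And>i j. i < n \<Longrightarrow> j < n \<Longrightarrow> (f ^^ i) x = (f ^^ j) x \<Longrightarrow> i = j"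
proof -
  define n where "n = (LEAST m. m > 0 \<and> (f ^^ m) x = x)"
  have ex: "\<exists>m. m > 0 \<and> (f ^^ m) x = x" using period_exists[OF assms] by blast
  have n: "n > 0" "(f ^^ n) x = x" using LeastI_ex[OF ex] unfolding n_def by auto
  have least: "\<And>m. m > 0 \<Longrightarrow> (f ^^ m) x = x \<Longrightarrow> n \<le> m"
    unfolding n_def by (rule Least_le) simp
  have dist: "\<And>i j. i < n \<Longrightarrow> j < n \<Longrightarrow> (f ^^ i) x = (f ^^ j) x \<Longrightarrow> i = j"
  proof -
    { fix i j assume ij: "i < j" "j < n" "(f ^^ i) x = (f ^^ j) x"
      have "(f ^^ i) x = (f ^^ i) ((f ^^ (j - i)) x)"
        using ij(3) fpa[of i "j - i" f x] ij(1) by simp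
      then have "x = (f ^^ (j - i)) x"
        using funpow_inj[OF assms(2,3)] funpow_in[OF assms(3)] assms(4) by blast
      then have "n \<le> j - i" using least[of "j - i"] ij(1) by simp
      then have False using ij by simp }
    then show "\<And>i j. i < n \<Longrightarrow> j < n \<Longrightarrow> (f ^^ i) x = (f ^^ j) x \<Longrightarrow> i = j"
      by (metis linorder_neq_iff)
  qed
  show ?thesis using that n dist by blast
qed

lemma orb_disjoint:
  assumes "finite S" "inj_on f S" "f ` S \<subseteq> S" "x \<in> S" "y \<in> S" "y \<notin> orb f x"
  shows "orb f x \<inter> orb f y = {}"
proof (rule ccontr)
  assume "orb f x \<inter> orb f y \<noteq> {}"
  then obtain z where z: "z \<in> orb f x" "z \<in> orb f y" by auto
  obtain m where m: "m > 0" "(f ^^ m) x = x" using period_exists[OF assms(1-4)] by blast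
  obtain m' where m': "m' > 0" "(f ^^ m') y = y" using period_exists[OF assms(1-3,5)] by blast
  have "orb f z = orb f x" using orb_same[OF m(2,1) z(1)] .
  moreover have "orb f z = orb f y" using orb_same[OF m'(2,1) z(2)] .
  ultimately show False using assms(6) orb_self[of y f] by simp
qed

section \<open>Splitting an orbit\<close>

lemma split_orbit:
  fixes tau tau' :: "nat \<Rightarrow> nat"
  assumes inj: "inj_on tau {..d}" and maps: "tau ` {..d} \<subseteq> {..d}"
    and p: "1 \<le> p" "p \<le> d" and s: "s = p - 1"
    and J: "J \<le> d" "J \<noteq> s"
    and n: "n > 0" "(tau ^^ n) s = s"
    and dist: "\<And>i j. i < n \<Longrightarrow> j < n \<Longrightarrow> (tau ^^ i) s = (tau ^^ j) s \<Longrightarrow> i = j"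
    and k: "0 < k" "k < n" "(tau ^^ k) s = J"
    and T1: "\<And>j. j \<le> d \<Longrightarrow> j \<noteq> s \<Longrightarrow> j \<noteq> J \<Longrightarrow> tau' (rr p j) = rr p (tau j)"
    and T2: "tau' (rr p J) = p"
    and T3: "tau' (rr p s) = rr p (tau J)"
    and T4: "tau' p = rr p (tau s)"
  shows "orb tau' p = insert p (rr p ` (\<lambda>i. (tau ^^ i) s) ` {1..k})"
    "orb tau' (rr p s) = rr p ` (\<lambda>i. (tau ^^ i) s) ` {k+1..n}"
    "\<And>j. j \<le> d \<Longrightarrow> j \<notin> orb tau s \<Longrightarrow> orb tau' (rr p j) = rr p ` orb tau j"
proof -
  have sd: "s \<le> d" using s p by simp
  have ind: "\<And>i. (tau ^^ i) s \<le> d" using funpow_in[OF maps, of s] sd by auto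
  have ne: "\<And>i. 0 < i \<Longrightarrow> i < n \<Longrightarrow> i \<noteq> k \<Longrightarrow> (tau ^^ i) s \<noteq> s \<and> (tau ^^ i) s \<noteq> J"
  proof -
    fix i assume i: "0 < i" "i < n" "i \<noteq> k"
    have "(tau ^^ i) s \<noteq> (tau ^^ 0) s" using dist[of i 0] i n by auto
    moreover have "(tau ^^ i) s \<noteq> (tau ^^ k) s" using dist[of i k] i k by auto
    ultimately show "(tau ^^ i) s \<noteq> s \<and> (tau ^^ i) s \<noteq> J" using k(3) by simp
  qed
  have A1: "\<And>i. 1 \<le> i \<Longrightarrow> i \<le> k \<Longrightarrow> (tau' ^^ i) p = rr p ((tau ^^ i) s)"
  proof -
    fix i show "1 \<le> i \<Longrightarrow> i \<le> k \<Longrightarrow> (tau' ^^ i) p = rr p ((tau ^^ i) s)"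
    proof (induction i)
      case 0 then show ?case by simp
    next
      case (Suc i)
      show ?case
      proof (cases "i = 0")
        case True then show ?thesis using T4 by simp
      next
        case False
        have IH: "(tau' ^^ i) p = rr p ((tau ^^ i) s)" using Suc False by simp
        have "(tau ^^ i) s \<noteq> s \<and> (tau ^^ i) s \<noteq> J" using ne[of i] False Suc.prems k by simp
        then have "tau' (rr p ((tau ^^ i) s)) = rr p (tau ((tau ^^ i) s))" using T1 ind by blast
        then show ?thesis using IH by simp
      qed
    qed
  qed
  have A2: "(tau' ^^ (k + 1)) p = p"
  proof -
    have "(tau' ^^ (k + 1)) p = tau' ((tau' ^^ k) p)" by simp
    also have "\<dots> = tau' (rr p J)" using A1[of k] k by simp
    finally show ?thesis using T2 by simp
  qed
  have "orb tau' p = (\<lambda>i. (tau' ^^ i) p) ` {1..k+1}" by (rule orb_periodic1[OF A2]) simp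
  also have "\<dots> = insert p ((\<lambda>i. (tau' ^^ i) p) ` {1..k})"
  proof -
    have "{1..k+1} = insert (k+1) {1..k}" by auto
    then show ?thesis using A2 by simp
  qed
  also have "(\<lambda>i. (tau' ^^ i) p) ` {1..k} = rr p ` (\<lambda>i. (tau ^^ i) s) ` {1..k}"
    using A1 by (auto simp: image_image intro!: image_cong)
  finally show "orb tau' p = insert p (rr p ` (\<lambda>i. (tau ^^ i) s) ` {1..k})" .
  have B1: "\<And>i. 1 \<le> i \<Longrightarrow> i \<le> n - k \<Longrightarrow> (tau' ^^ i) (rr p s) = rr p ((tau ^^ (k + i)) s)"
  proof -
    fix i show "1 \<le> i \<Longrightarrow> i \<le> n - k \<Longrightarrow> (tau' ^^ i) (rr p s) = rr p ((tau ^^ (k + i)) s)"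
    proof (induction i)
      case 0 then show ?case by simp
    next
      case (Suc i)
      show ?case
      proof (cases "i = 0")
        case True
        have "(tau ^^ (k + 1)) s = tau J" using k(3) by simp
        then show ?thesis using T3 True by simp
      next
        case False
        have IH: "(tau' ^^ i) (rr p s) = rr p ((tau ^^ (k + i)) s)" using Suc False by simp
        have "(tau ^^ (k + i)) s \<noteq> s \<and> (tau ^^ (k + i)) s \<noteq> J" using ne[of "k + i"] False Suc.prems k by simp
        then have "tau' (rr p ((tau ^^ (k + i)) s)) = rr p (tau ((tau ^^ (k + i)) s))" using T1 ind by blast
        then show ?thesis using IH by simp
      qed
    qed
  qed
  have B2: "(tau' ^^ (n - k)) (rr p s) = rr p s"
    using B1[of "n - k"] k n by simp
  have "orb tau' (rr p s) = (\<lambda>i. (tau' ^^ i) (rr p s)) ` {1..n-k}" by (rule orb_periodic1[OF B2]) (use k in simp)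
  also have "\<dots> = (\<lambda>i. rr p ((tau ^^ (k + i)) s)) ` {1..n-k}"
    using B1 by (auto intro!: image_cong)
  also have "\<dots> = rr p ` (\<lambda>i. (tau ^^ i) s) ` {k+1..n}"
  proof -
    have "{k+1..n} = (\<lambda>i. k + i) ` {1..n-k}"
    proof
      show "{k+1..n} \<subseteq> (\<lambda>i. k + i) ` {1..n-k}"
      proof
        fix x assume "x \<in> {k+1..n}"
        then have "x = k + (x - k)" "x - k \<in> {1..n-k}" by auto
        then show "x \<in> (\<lambda>i. k + i) ` {1..n-k}" by blast
      qed
    qed (use k in auto)
    then show ?thesis by (simp only: image_image)
  qed
  finally show "orb tau' (rr p s) = rr p ` (\<lambda>i. (tau ^^ i) s) ` {k+1..n}" .
  fix j assume j: "j \<le> d" "j \<notin> orb tau s"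
  have disj: "orb tau s \<inter> orb tau j = {}" by (rule orb_disjoint[OF finite_atMost inj maps]) (use sd j in auto)
  have Jo: "J \<in> orb tau s" using k(3) orb_funpow by metis
  have so: "s \<in> orb tau s" by (rule orb_self)
  have C1: "\<And>i. (tau' ^^ i) (rr p j) = rr p ((tau ^^ i) j)"
  proof -
    fix i show "(tau' ^^ i) (rr p j) = rr p ((tau ^^ i) j)"
    proof (induction i)
      case 0 then show ?case by simp
    next
      case (Suc i)
      have mem: "(tau ^^ i) j \<in> orb tau j" by (rule orb_funpow)
      have "(tau ^^ i) j \<noteq> s" "(tau ^^ i) j \<noteq> J" using disj mem Jo so by auto
      moreover have "(tau ^^ i) j \<le> d" using funpow_in[OF maps, of j i] j by auto
      ultimately have "tau' (rr p ((tau ^^ i) j)) = rr p (tau ((tau ^^ i) j))" using T1 by blast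
      then show ?case using Suc by simp
    qed
  qed
  show "orb tau' (rr p j) = rr p ` orb tau j"
    unfolding orb_def using C1 by (auto simp: image_image)
qed


lemma orb_same2:
  assumes "finite S" "inj_on f S" "f ` S \<subseteq> S" "x \<in> S" "y \<in> orb f x"
  shows "orb f y = orb f x"
proof -
  obtain m where m: "m > 0" "(f ^^ m) x = x" using period_exists[OF assms(1-4)] by blast
  show ?thesis by (rule orb_same[OF m(2,1) assms(5)])
qed

lemma orb_eq_or_disj:
  assumes "finite S" "inj_on f S" "f ` S \<subseteq> S" "x \<in> S" "y \<in> S" "z \<in> orb f x" "z \<in> orb f y"
  shows "orb f x = orb f y"
  using orb_same2[OF assms(1-4,6)] orb_same2[OF assms(1-3,5,7)] by simp

lemma rr_surj: "y \<le> d + 1 \<Longrightarrow> y \<noteq> p \<Longrightarrow> p \<le> d \<Longrightarrow> \<exists>j. j \<le> d \<and> rr p j = y"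
proof -
  assume y: "y \<le> d + 1" "y \<noteq> p" "p \<le> d"
  show ?thesis
  proof (cases "y < p")
    case True
    then show ?thesis using y unfolding rr_def by (intro exI[of _ y]) auto
  next
    case False
    then show ?thesis using y unfolding rr_def by (intro exI[of _ "y - 1"]) auto
  qed
qed

lemma rr_le: "j \<le> d \<Longrightarrow> rr p j \<le> d + 1"
  unfolding rr_def by auto

lemma wt_rr:
  assumes X: "X \<subseteq> {..d}" and p: "1 \<le> p" "p \<le> d"
  shows "wt (d + 1) (rr p ` X) = wt d X"
proof -
  have "rr p ` X - {0, d + 1} = rr p ` (X - {0, d})"
  proof
    show "rr p ` X - {0, d + 1} \<subseteq> rr p ` (X - {0, d})"
    proof
      fix y assume "y \<in> rr p ` X - {0, d + 1}"
      then obtain x where x: "x \<in> X" "y = rr p x" "y \<noteq> 0" "y \<noteq> d + 1" by auto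
      have "x \<noteq> 0"
      proof
        assume "x = 0"
        then have "y = 0" using x(2) p unfolding rr_def by simp
        then show False using x(3) by simp
      qed
      moreover have "x \<noteq> d" using x(2,4) p unfolding rr_def by auto
      ultimately show "y \<in> rr p ` (X - {0, d})" using x by auto
    qed
    show "rr p ` (X - {0, d}) \<subseteq> rr p ` X - {0, d + 1}"
    proof
      fix y assume "y \<in> rr p ` (X - {0, d})"
      then obtain x where x: "x \<in> X" "x \<noteq> 0" "x \<noteq> d" "y = rr p x" by auto
      have "x < d" using x X by auto
      then have "y \<noteq> 0" "y \<noteq> d + 1" using x p unfolding rr_def by auto
      then show "y \<in> rr p ` X - {0, d + 1}" using x by auto
    qed
  qed
  then show ?thesis unfolding wt_def using card_image[OF inj_on_subset[OF rr_inj[of p]]] by simp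
qed

lemma count_choice:
  fixes c :: "nat \<Rightarrow> nat"
  assumes c0: "c 0 = 0" and step: "\<And>i. c (Suc i) \<le> c i + 1" and cn: "m < c n" and m: "1 \<le> m"
  obtains k where "1 \<le> k" "k < n" "c k = m" "c (k - 1) = m - 1"
proof -
  have ex: "\<exists>i. m \<le> c i" using cn by (intro exI[of _ n]) simp
  define k where "k = (LEAST i. m \<le> c i)"
  have ck: "m \<le> c k" unfolding k_def by (rule LeastI_ex[OF ex])
  have kmin: "\<And>i. i < k \<Longrightarrow> c i < m"
  proof -
    fix i assume "i < k"
    then have "\<not> (m \<le> c i)" unfolding k_def by (rule not_less_Least)
    then show "c i < m" by simp
  qed
  have k0: "k \<noteq> 0"
  proof
    assume "k = 0"
    then show False using ck c0 m by simp
  qed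
  then have kk: "Suc (k - 1) = k" by simp
  have "c (k - 1) < m" using kmin k0 by simp
  moreover have "c k \<le> c (k - 1) + 1" using step[of "k - 1"] unfolding kk .
  ultimately have e1: "c k = m" "c (k - 1) = m - 1" using ck by auto
  have "k \<le> n" using kmin[of n] cn by (cases "n < k") auto
  moreover have "k \<noteq> n" using e1 cn by auto
  ultimately have "k < n" by simp
  show ?thesis by (rule that[of k]) (use k0 e1 \<open>k < n\<close> in auto)
qed


lemma card_insert_diff_le: "finite X \<Longrightarrow> card (insert x X - E) \<le> card (X - E) + 1"
proof -
  assume f: "finite X"
  have sub: "insert x X - E \<subseteq> insert x (X - E)" by auto
  have "card (insert x X - E) \<le> card (insert x (X - E))" by (rule card_mono[OF _ sub]) (use f in simp)
  also have "\<dots> \<le> card (X - E) + 1" by (simp add: card_insert_if f)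
  finally show ?thesis .
qed

lemma main_choice:
  assumes P: "is_perm A pt pb" and d1: "1 \<le> card A"
    and Q1: "Q1 \<in> orbs A pt pb" and wQ1: "wt (card A) Q1 = m1 + 1"
    and m: "1 \<le> m11" "1 \<le> m12" "m11 + m12 = m1"
  obtains s n k where "1 \<le> s" "s < card A" "n > 0" "(tauf A pt pb ^^ n) s = s"
    "\<And>i j. i < n \<Longrightarrow> j < n \<Longrightarrow> (tauf A pt pb ^^ i) s = (tauf A pt pb ^^ j) s \<Longrightarrow> i = j"
    "0 < k" "k < n" "Q1 = (\<lambda>i. (tauf A pt pb ^^ i) s) ` {1..n}"
    "card ((\<lambda>i. (tauf A pt pb ^^ i) s) ` {1..k} - {0, card A}) = m12"
    "(tauf A pt pb ^^ k) s \<noteq> 0" "(tauf A pt pb ^^ k) s \<noteq> card A"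
proof -
  let ?d = "card A" and ?t = "tauf A pt pb"
  let ?E = "{0, card A}"
  obtain j0 where j0: "j0 \<le> ?d" "Q1 = orb ?t j0" using Q1 unfolding orbs_def by auto
  have Qs: "Q1 \<subseteq> {..?d}" using orb_closed(1)[OF P d1 j0(1)] j0(2) by simp
  have "card (Q1 - ?E) = m1 + 1" using wQ1 unfolding wt_def .
  then have "card (Q1 - ?E) \<noteq> 0" by simp
  then have "Q1 - ?E \<noteq> {}" by (metis card.empty)
  then obtain s where s: "s \<in> Q1" "s \<noteq> 0" "s \<noteq> ?d" by auto
  have s': "1 \<le> s" "s < ?d" using s Qs by auto
  have Qo: "Q1 = orb ?t s"
    using orb_same2[OF finite_atMost tau_inj[OF P] tau_maps[OF P], of j0 s] j0 s(1) by simp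
  obtain n where n: "n > 0" "(?t ^^ n) s = s"
    and dist: "\<And>i j. i < n \<Longrightarrow> j < n \<Longrightarrow> (?t ^^ i) s = (?t ^^ j) s \<Longrightarrow> i = j"
    using min_period[OF finite_atMost tau_inj[OF P] tau_maps[OF P], of s] s' by auto
  let ?si = "\<lambda>i. (?t ^^ i) s"
  have Qn: "Q1 = ?si ` {1..n}" using orb_periodic1[OF n(2,1)] Qo by simp
  define c where "c i = card (?si ` {1..i} - ?E)" for i
  have c0: "c 0 = 0" unfolding c_def by simp
  have cstep: "\<And>i. c (Suc i) \<le> c i + 1"
  proof -
    fix i
    have "?si ` {1..Suc i} = insert (?si (Suc i)) (?si ` {1..i})" by (auto simp: atLeastAtMostSuc_conv)
    then show "c (Suc i) \<le> c i + 1" unfolding c_def using card_insert_diff_le[of "?si ` {1..i}"] by simp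
  qed
  have cn: "c n = m1 + 1" unfolding c_def using wQ1 Qn unfolding wt_def by simp
  obtain k where k: "1 \<le> k" "k < n" "c k = m12" "c (k - 1) = m12 - 1"
    using count_choice[of c m12 n, OF c0 cstep] cn m by auto
  have kE: "?si k \<notin> ?E"
  proof
    assume inE: "?si k \<in> ?E"
    have "?si ` {1..k} = insert (?si k) (?si ` {1..k - 1})"
    proof -
      have "{1..k} = insert k {1..k-1}" using k(1) by auto
      then show ?thesis by simp
    qed
    then have "?si ` {1..k} - ?E = ?si ` {1..k - 1} - ?E" using inE by auto
    then have "c k = c (k - 1)" unfolding c_def by simp
    then show False using k m by simp
  qed
  show ?thesis
    by (rule that[of s n k]) (use s' n dist k Qn kE c_def in auto)
qed


lemma main_ext:
  assumes P: "is_perm A pt pb" and d1: "1 \<le> card A" and a': "a' \<notin> A"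
    and os: "orb_stratum A pt pb (m1 # ms)"
    and m: "1 \<le> m11" "1 \<le> m12" "m11 + m12 = m1"
  shows "\<exists>b\<in>A. \<exists>b'\<in>A. b \<noteq> b' \<and> 2 \<le> pt b \<and>
     orb_stratum (insert a' A) (insert_before pt a' b) (insert_before pb a' b') (m11 # m12 # ms)"
proof -
  let ?d = "card A" and ?t = "tauf A pt pb"
  let ?E = "{0, card A}"
  let ?O = "{Q \<in> orbs A pt pb. wt ?d Q \<noteq> 1}"
  obtain g where g: "bij_betw g ?O {..<length (m1 # ms)}"
      "\<forall>Q\<in>?O. wt ?d Q = (m1 # ms) ! (g Q) + 1"
    using os unfolding orb_stratum_def by blast
  have "0 \<in> g ` ?O" using g(1) unfolding bij_betw_def by simp
  then obtain Q1 where Q1: "Q1 \<in> ?O" "g Q1 = 0" by auto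
  have "wt ?d Q1 = (m1 # ms) ! (g Q1) + 1" using g(2) Q1(1) by blast
  then have wQ1: "wt ?d Q1 = m1 + 1" using Q1(2) by simp
  obtain s n k where s: "1 \<le> s" "s < ?d" and n: "n > 0" "(?t ^^ n) s = s"
    and dist: "\<And>i j. i < n \<Longrightarrow> j < n \<Longrightarrow> (?t ^^ i) s = (?t ^^ j) s \<Longrightarrow> i = j"
    and k: "0 < k" "k < n" and Qn: "Q1 = (\<lambda>i. (?t ^^ i) s) ` {1..n}"
    and cB: "card ((\<lambda>i. (?t ^^ i) s) ` {1..k} - ?E) = m12"
    and kE: "(?t ^^ k) s \<noteq> 0" "(?t ^^ k) s \<noteq> ?d"
    using main_choice[OF P d1 _ wQ1 m] Q1(1) by blast
  let ?si = "\<lambda>i. (?t ^^ i) s"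
  define J where "J = ?si k"
  have sid: "\<And>i. ?si i \<le> ?d" using funpow_in[OF tau_maps[OF P], of s] s by auto
  have J: "J \<le> ?d" "J \<noteq> ?d" "J \<noteq> 0" using sid kE unfolding J_def by auto
  have Js: "J \<noteq> s"
  proof
    assume "J = s"
    then have "?si k = ?si 0" unfolding J_def by simp
    then show False using dist[of k 0] k by simp
  qed
  define b where "b = inv_into A pt (s + 1)"
  define b' where "b' = inv_into A pt (J + 1)"
  have b: "b \<in> A" "pt b = s + 1" using inv_pt[OF P, of "s+1"] s unfolding b_def by auto
  have b': "b' \<in> A" "pt b' = J + 1" using inv_pt[OF P, of "J+1"] J unfolding b'_def by auto
  have bb: "b \<noteq> b'" using b b' Js by auto
  let ?A2 = "insert a' A" and ?pt2 = "insert_before pt a' b" and ?pb2 = "insert_before pb a' b'"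
  let ?t2 = "tauf ?A2 ?pt2 ?pb2"
  let ?p = "s + 1"
  have P2: "is_perm ?A2 ?pt2 ?pb2" by (rule P2[OF P d1 a' b(1) b'(1) bb])
  have cA2: "card ?A2 = ?d + 1" by (rule cA2[OF P d1 a' b(1) b'(1) bb])
  have d12: "1 \<le> card ?A2" using cA2 by simp
  have pb1: "pt b - 1 = s" "pt b' - 1 = J" using b b' by auto
  have T1: "\<And>j. j \<le> ?d \<Longrightarrow> j \<noteq> s \<Longrightarrow> j \<noteq> J \<Longrightarrow> ?t2 (rr ?p j) = rr ?p (?t j)"
    using tau2_gen[OF P d1 a' b(1) b'(1) bb] pb1 b(2) by metis
  have T2: "?t2 (rr ?p J) = ?p" using tau2_J[OF P d1 a' b(1) b'(1) bb] pb1 b(2) by metis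
  have T3: "?t2 (rr ?p s) = rr ?p (?t J)" using tau2_s[OF P d1 a' b(1) b'(1) bb] pb1 b(2) by metis
  have T4: "?t2 ?p = rr ?p (?t s)" using tau2_N[OF P d1 a' b(1) b'(1) bb] pb1 b(2) by metis
  have kJ: "?si k = J" unfolding J_def ..
  have p1: "1 \<le> ?p" by simp
  have p2: "?p \<le> ?d" using s by simp
  have p3: "s = ?p - 1" by simp
  note SP = split_orbit[where tau = ?t and tau' = ?t2 and d = ?d and p = ?p and s = s and J = J and n = n and k = k,
    OF tau_inj[OF P] tau_maps[OF P] p1 p2 p3 J(1) Js n(1) n(2) dist k(1) k(2) kJ T1 T2 T3 T4]
  define B0 where "B0 = ?si ` {1..k}"
  define A0 where "A0 = ?si ` {k+1..n}"
  define BB where "BB = insert ?p (rr ?p ` B0)"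
  define BA where "BA = rr ?p ` A0"
  have BBo: "orb ?t2 ?p = BB" unfolding BB_def B0_def by (rule SP(1))
  have BAo: "orb ?t2 (rr ?p s) = BA" unfolding BA_def A0_def by (rule SP(2))
  have Oth: "\<And>j. j \<le> ?d \<Longrightarrow> j \<notin> Q1 \<Longrightarrow> orb ?t2 (rr ?p j) = rr ?p ` orb ?t j"
  proof -
    fix j assume j: "j \<le> ?d" "j \<notin> Q1"
    have "Q1 = orb ?t s" using orb_periodic1[OF n(2,1)] Qn by simp
    then have "j \<notin> orb ?t s" using j(2) by simp
    then show "orb ?t2 (rr ?p j) = rr ?p ` orb ?t j" using SP(3) j(1) by blast
  qed
  have Q1o: "Q1 = orb ?t s" using orb_periodic1[OF n(2,1)] Qn by simp
  have inj2: "inj_on ?t2 {..?d + 1}" using tau_inj[OF P2] cA2 by simp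
  have maps2: "?t2 ` {..?d + 1} \<subseteq> {..?d + 1}" using tau_maps[OF P2] cA2 by simp
  have ps: "?p \<le> ?d" using s by simp
  have p_le: "?p \<le> ?d + 1" using s by simp
  have rs_le: "rr ?p s \<le> ?d + 1" using rr_le[of s ?d ?p] s by simp
  have orbsQ: "\<And>Q. Q \<in> orbs A pt pb \<Longrightarrow> Q \<subseteq> {..?d}"
    unfolding orbs_def using orb_closed(1)[OF P d1] by auto
  have Q1s: "Q1 \<subseteq> {..?d}" using orbsQ Q1(1) by simp
  have B0s: "B0 \<subseteq> Q1" unfolding B0_def Qn using k by auto
  have A0s: "A0 \<subseteq> Q1" unfolding A0_def Qn using k by auto
  have sA0: "s \<in> A0" unfolding A0_def using k n by (intro image_eqI[of _ _ n]) auto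
  have BA_B0: "B0 \<union> A0 = Q1" unfolding B0_def A0_def Qn using k by (auto simp: image_Un[symmetric] intro!: arg_cong[where f="image _"])
  have disjAB: "B0 \<inter> A0 = {}"
  proof -
    { fix x assume x: "x \<in> B0" "x \<in> A0"
      then obtain i l where il: "1 \<le> i" "i \<le> k" "k + 1 \<le> l" "l \<le> n" "?si i = x" "?si l = x"
        unfolding B0_def A0_def by auto
      have False
      proof (cases "l = n")
        case True
        then have "?si i = ?si 0" using il n by simp
        then show False using dist[of i 0] il k by simp
      next
        case False
        then have "?si i = ?si l" using il by simp
        then show False using dist[of i l] il k False by simp
      qed }
    then show ?thesis by blast
  qed
  have finQ1: "finite Q1" using Q1s finite_subset by blast
  have wA0: "card (A0 - ?E) = m11 + 1"
  proof -
    have "Q1 - ?E = (B0 - ?E) \<union> (A0 - ?E)" using BA_B0 by blast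
    moreover have "(B0 - ?E) \<inter> (A0 - ?E) = {}" using disjAB by blast
    moreover have "finite (B0 - ?E)" "finite (A0 - ?E)" using B0s A0s finQ1 finite_subset by blast+
    ultimately have "card (Q1 - ?E) = card (B0 - ?E) + card (A0 - ?E)" by (simp add: card_Un_disjoint)
    moreover have "card (Q1 - ?E) = m1 + 1" using wQ1 unfolding wt_def .
    moreover have "card (B0 - ?E) = m12" using cB unfolding B0_def .
    ultimately show ?thesis using m by simp
  qed
  have wBA: "wt (?d + 1) BA = m11 + 1"
    unfolding BA_def using wt_rr[of A0 ?d ?p] A0s Q1s ps wA0 unfolding wt_def by auto
  have wBB: "wt (?d + 1) BB = m12 + 1"
  proof -
    have pn: "?p \<notin> rr ?p ` B0"
    proof
      assume "?p \<in> rr ?p ` B0"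
      then obtain x where "?p = rr ?p x" by auto
      then show False using rr_ne[of ?p x] by simp
    qed
    have "BB - {0, ?d + 1} = insert ?p (rr ?p ` B0 - {0, ?d + 1})" unfolding BB_def using ps by auto
    moreover have "finite (rr ?p ` B0 - {0, ?d + 1})" using B0s finQ1 finite_subset by blast
    ultimately have "card (BB - {0, ?d + 1}) = card (rr ?p ` B0 - {0, ?d + 1}) + 1" using pn by simp
    moreover have "card (rr ?p ` B0 - {0, ?d + 1}) = m12"
      using wt_rr[of B0 ?d ?p] B0s Q1s ps cB unfolding wt_def B0_def by auto
    ultimately show ?thesis unfolding wt_def by simp
  qed
  have orbs2: "orbs ?A2 ?pt2 ?pb2 = {BA, BB} \<union> (\<lambda>Q. rr ?p ` Q) ` (orbs A pt pb - {Q1})"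
  proof
    show "orbs ?A2 ?pt2 ?pb2 \<subseteq> {BA, BB} \<union> (\<lambda>Q. rr ?p ` Q) ` (orbs A pt pb - {Q1})"
    proof
      fix Q assume "Q \<in> orbs ?A2 ?pt2 ?pb2"
      then obtain y where y: "y \<le> ?d + 1" "Q = orb ?t2 y" unfolding orbs_def cA2 by auto
      show "Q \<in> {BA, BB} \<union> (\<lambda>Q. rr ?p ` Q) ` (orbs A pt pb - {Q1})"
      proof (cases "y = ?p")
        case True
        then show ?thesis using y BBo by simp
      next
        case False
        obtain j where j: "j \<le> ?d" "rr ?p j = y" using rr_surj[OF y(1) False ps] by blast
        show ?thesis
        proof (cases "j \<in> Q1")
          case True
          then have "j \<in> B0 \<or> j \<in> A0" using BA_B0 by blast
          then show ?thesis
          proof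
            assume "j \<in> B0"
            then have yo: "y \<in> orb ?t2 ?p" unfolding BBo BB_def using j by blast
            have "orb ?t2 y = orb ?t2 ?p" using orb_same2[OF finite_atMost inj2 maps2, of ?p y] p_le yo by simp
            then show ?thesis using y BBo by simp
          next
            assume "j \<in> A0"
            then have yo: "y \<in> orb ?t2 (rr ?p s)" unfolding BAo BA_def using j by blast
            have "orb ?t2 y = orb ?t2 (rr ?p s)" using orb_same2[OF finite_atMost inj2 maps2, of "rr ?p s" y] rs_le yo by simp
            then show ?thesis using y BAo by simp
          qed
        next
          case False
          have e: "Q = rr ?p ` orb ?t j" using Oth[OF j(1) False] y j by simp
          have "orb ?t j \<in> orbs A pt pb" unfolding orbs_def using j by auto
          moreover have "orb ?t j \<noteq> Q1" using False orb_self[of j ?t] by auto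
          ultimately show ?thesis using e by blast
        qed
      qed
    qed
  next
    show "{BA, BB} \<union> (\<lambda>Q. rr ?p ` Q) ` (orbs A pt pb - {Q1}) \<subseteq> orbs ?A2 ?pt2 ?pb2"
    proof
      fix Q assume "Q \<in> {BA, BB} \<union> (\<lambda>Q. rr ?p ` Q) ` (orbs A pt pb - {Q1})"
      then consider "Q = BA" | "Q = BB" | (o) R where "R \<in> orbs A pt pb" "R \<noteq> Q1" "Q = rr ?p ` R" by blast
      then show "Q \<in> orbs ?A2 ?pt2 ?pb2"
      proof cases
        case 1
        then show ?thesis unfolding orbs_def cA2 using BAo rs_le by force
      next
        case 2
        then show ?thesis unfolding orbs_def cA2 using BBo p_le by force
      next
        case o
        obtain j where j: "j \<le> ?d" "R = orb ?t j" using o(1) unfolding orbs_def by auto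
        have "j \<notin> Q1"
        proof
          assume "j \<in> Q1"
          then have "orb ?t j = orb ?t s"
            using orb_same2[OF finite_atMost tau_inj[OF P] tau_maps[OF P], of s j] Q1o s by simp
          then show False using o(2) j(2) Q1o by simp
        qed
        then have "Q = orb ?t2 (rr ?p j)" using Oth[OF j(1)] o(3) j(2) by simp
        moreover have "rr ?p j \<le> ?d + 1" using rr_le[OF j(1)] .
        ultimately show ?thesis unfolding orbs_def cA2 by blast
      qed
    qed
  qed
  have wBA1: "wt (?d + 1) BA \<noteq> 1" using wBA m by simp
  have wBB1: "wt (?d + 1) BB \<noteq> 1" using wBB m by simp
  have wold: "\<And>Q. Q \<in> orbs A pt pb \<Longrightarrow> wt (?d + 1) (rr ?p ` Q) = wt ?d Q"
    using wt_rr orbsQ ps by simp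
  let ?O2 = "{Q \<in> orbs ?A2 ?pt2 ?pb2. wt (card ?A2) Q \<noteq> 1}"
  have O2: "?O2 = {BA, BB} \<union> (\<lambda>Q. rr ?p ` Q) ` (?O - {Q1})"
    unfolding orbs2 cA2 using wBA1 wBB1 wold by auto
  have pBB: "?p \<in> BB" unfolding BB_def by simp
  have pBA: "?p \<notin> BA"
  proof
    assume "?p \<in> BA"
    then obtain x where "?p = rr ?p x" unfolding BA_def by auto
    then show False using rr_ne[of ?p x] by simp
  qed
  have BAB: "BA \<noteq> BB" using pBB pBA by auto
  have nBB: "\<And>Q. rr ?p ` Q \<noteq> BB"
  proof
    fix Q assume "rr ?p ` Q = BB"
    then have "?p \<in> rr ?p ` Q" using pBB by simp
    then obtain x where "?p = rr ?p x" by auto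
    then show False using rr_ne[of ?p x] by simp
  qed
  have nBA: "\<And>Q. Q \<in> orbs A pt pb \<Longrightarrow> Q \<noteq> Q1 \<Longrightarrow> rr ?p ` Q \<noteq> BA"
  proof
    fix Q assume Q: "Q \<in> orbs A pt pb" "Q \<noteq> Q1" and e: "rr ?p ` Q = BA"
    have "Q = A0" using e unfolding BA_def by (simp add: inj_image_eq_iff[OF rr_inj])
    then have sQ: "s \<in> Q" using sA0 by simp
    obtain j where j: "j \<le> ?d" "Q = orb ?t j" using Q(1) unfolding orbs_def by auto
    have "orb ?t s = orb ?t j"
      using orb_same2[OF finite_atMost tau_inj[OF P] tau_maps[OF P], of j s] j sQ by simp
    then show False using Q(2) j(2) Q1o by simp
  qed
  define pre where "pre Q = {x. x \<le> ?d \<and> rr ?p x \<in> Q}" for Q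
  have pre_rr: "\<And>Q. Q \<subseteq> {..?d} \<Longrightarrow> pre (rr ?p ` Q) = Q"
  proof -
    fix Q :: "nat set" assume Q: "Q \<subseteq> {..?d}"
    show "pre (rr ?p ` Q) = Q"
      unfolding pre_def using Q inj_image_mem_iff[OF rr_inj] by auto
  qed
  define g' where "g' Q = (if Q = BA then 0 else if Q = BB then 1 else Suc (g (pre Q)))" for Q
  have g'BA: "g' BA = 0" unfolding g'_def by simp
  have g'BB: "g' BB = 1" unfolding g'_def using BAB by simp
  have g'old: "\<And>Q. Q \<in> ?O - {Q1} \<Longrightarrow> g' (rr ?p ` Q) = Suc (g Q)"
  proof -
    fix Q assume Q: "Q \<in> ?O - {Q1}"
    have "rr ?p ` Q \<noteq> BA" using nBA Q by blast
    moreover have "rr ?p ` Q \<noteq> BB" using nBB by blast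
    moreover have "pre (rr ?p ` Q) = Q" using pre_rr orbsQ Q by blast
    ultimately show "g' (rr ?p ` Q) = Suc (g Q)" unfolding g'_def by simp
  qed
  have ginj: "inj_on g ?O" using g(1) unfolding bij_betw_def by simp
  have gimg: "g ` ?O = {..<length ms + 1}" using g(1) unfolding bij_betw_def by simp
  have gpos: "\<And>Q. Q \<in> ?O - {Q1} \<Longrightarrow> g Q \<noteq> 0"
  proof -
    fix Q assume Q: "Q \<in> ?O - {Q1}"
    show "g Q \<noteq> 0"
    proof
      assume "g Q = 0"
      then have "g Q = g Q1" using Q1(2) by simp
      then have "Q = Q1" using inj_onD[OF ginj] Q Q1(1) by blast
      then show False using Q by simp
    qed
  qed
  have gimg2: "g ` (?O - {Q1}) = {..<length ms + 1} - {0}"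
  proof -
    have "g ` (?O - {Q1}) = g ` ?O - g ` {Q1}"
      by (rule inj_on_image_set_diff[OF ginj]) (use Q1(1) in auto)
    then show ?thesis using gimg Q1(2) by simp
  qed
  have bij': "bij_betw g' ?O2 {..<length (m11 # m12 # ms)}"
  proof (rule bij_betw_imageI)
    show "inj_on g' ?O2"
    proof (rule inj_onI)
      fix X Y assume X: "X \<in> ?O2" and Y: "Y \<in> ?O2" and e: "g' X = g' Y"
      from X[unfolded O2] consider "X = BA" | "X = BB" | (o) Q where "Q \<in> ?O - {Q1}" "X = rr ?p ` Q" by blast
      note cX = this
      from Y[unfolded O2] consider "Y = BA" | "Y = BB" | (o) R where "R \<in> ?O - {Q1}" "Y = rr ?p ` R" by blast
      note cY = this
      show "X = Y"
      proof (cases rule: cX)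
        case 1
        show ?thesis
        proof (cases rule: cY)
          case 1 then show ?thesis using \<open>X = BA\<close> by simp
        next
          case 2 then show ?thesis using \<open>X = BA\<close> e g'BA g'BB by simp
        next
          case (o R)
          have "g' Y = Suc (g R)" using g'old o by simp
          then show ?thesis using \<open>X = BA\<close> e g'BA by simp
        qed
      next
        case 2
        show ?thesis
        proof (cases rule: cY)
          case 1 then show ?thesis using \<open>X = BB\<close> e g'BA g'BB by simp
        next
          case 2 then show ?thesis using \<open>X = BB\<close> by simp
        next
          case (o R)
          have "g' Y = Suc (g R)" using g'old o by simp
          then have "g R = 0" using \<open>X = BB\<close> e g'BB by simp
          then show ?thesis using gpos o(1) by blast
        qed
      next
        case (o Q)
        show ?thesis
        proof (cases rule: cY)
          case 1
          have "g' X = Suc (g Q)" using g'old o by simp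
          then show ?thesis using \<open>Y = BA\<close> e g'BA by simp
        next
          case 2
          have "g' X = Suc (g Q)" using g'old o by simp
          then have "g Q = 0" using \<open>Y = BB\<close> e g'BB by simp
          then show ?thesis using gpos o(1) by blast
        next
          case (o R)
          have "Suc (g Q) = Suc (g R)" using e \<open>X = rr ?p ` Q\<close> \<open>Q \<in> ?O - {Q1}\<close> o g'old by metis
          then have "Q = R" using inj_onD[OF ginj] \<open>Q \<in> ?O - {Q1}\<close> o(1) by auto
          then show ?thesis using \<open>X = rr ?p ` Q\<close> o(2) by simp
        qed
      qed
    qed
    show "g' ` ?O2 = {..<length (m11 # m12 # ms)}"
    proof -
      have "g' ` ?O2 = {0, 1} \<union> g' ` ((\<lambda>Q. rr ?p ` Q) ` (?O - {Q1}))"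
        unfolding O2 using g'BA g'BB by auto
      also have "g' ` ((\<lambda>Q. rr ?p ` Q) ` (?O - {Q1})) = Suc ` g ` (?O - {Q1})"
        unfolding image_image using g'old by (auto intro!: image_cong)
      also have "\<dots> = Suc ` ({..<length ms + 1} - {0})" unfolding gimg2 ..
      also have "{0, 1} \<union> Suc ` ({..<length ms + 1} - {0}) = {..<length (m11 # m12 # ms)}"
      proof
        show "{0, 1} \<union> Suc ` ({..<length ms + 1} - {0}) \<subseteq> {..<length (m11 # m12 # ms)}" by auto
        show "{..<length (m11 # m12 # ms)} \<subseteq> {0, 1} \<union> Suc ` ({..<length ms + 1} - {0})"
        proof
          fix x assume x: "x \<in> {..<length (m11 # m12 # ms)}"
          show "x \<in> {0, 1} \<union> Suc ` ({..<length ms + 1} - {0})"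
          proof (cases "x \<le> 1")
            case True then show ?thesis by auto
          next
            case False
            then have "x = Suc (x - 1)" "x - 1 \<in> {..<length ms + 1} - {0}" using x by auto
            then show ?thesis by blast
          qed
        qed
      qed
      finally show ?thesis .
    qed
  qed
  have vals: "\<forall>X\<in>?O2. wt (card ?A2) X = (m11 # m12 # ms) ! (g' X) + 1"
  proof
    fix X assume X: "X \<in> ?O2"
    from X[unfolded O2] consider "X = BA" | "X = BB" | (o) Q where "Q \<in> ?O - {Q1}" "X = rr ?p ` Q" by blast
    then show "wt (card ?A2) X = (m11 # m12 # ms) ! (g' X) + 1"
    proof cases
      case 1 then show ?thesis using wBA g'BA cA2 by simp
    next
      case 2 then show ?thesis using wBB g'BB cA2 by simp
    next
      case (o Q)
      have w: "wt (?d + 1) X = wt ?d Q" using wold o by simp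
      have wq: "wt ?d Q = (m1 # ms) ! (g Q) + 1" using g(2) o(1) by blast
      obtain i where i: "g Q = Suc i" using gpos[OF o(1)] not0_implies_Suc by blast
      have "g' X = Suc (Suc i)" using g'old[OF o(1)] o(2) i by simp
      then show ?thesis using w wq i cA2 by simp
    qed
  qed
  have os2: "orb_stratum ?A2 ?pt2 ?pb2 (m11 # m12 # ms)"
    unfolding orb_stratum_def using bij' vals by blast
  show ?thesis using b b' bb os2 s by force
qed


theorem lemma6p5:
  fixes A :: "'a set" and pt pb :: "'a \<Rightarrow> nat" and a' :: 'a
    and m1 m11 m12 :: nat and ms :: "nat list"
  assumes "standard_perm A pt pb"
    and "in_stratum A pt pb (m1 # ms)"
    and "m1 \<ge> 2" and "\<forall>m \<in> set ms. m \<ge> 1"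
    and "m11 \<ge> 1" and "m12 \<ge> 1" and "m11 + m12 = m1"
    and "a' \<notin> A"
  shows "\<exists>pt' pb'. simple_extension A pt pb a' pt' pb' \<and>
           irreducible_perm (insert a' A) pt' pb' \<and>
           in_stratum (insert a' A) pt' pb' (m11 # m12 # ms)"
proof -
  have P: "is_perm A pt pb" using assms(1) unfolding standard_perm_def by simp
  obtain c where c: "c \<in> A" "pt c = 1" "pb c = card A" using assms(1) unfolding standard_perm_def by blast
  have "A \<noteq> {}" using c(1) by blast
  then have "0 < card A" using perm_facts(1)[OF P] by (simp add: card_gt_0_iff)
  then have d1: "1 \<le> card A" by simp
  have os: "orb_stratum A pt pb (m1 # ms)" using stratum_iff[OF P d1] assms(2) by simp
  obtain b b' where b: "b \<in> A" and b': "b' \<in> A" and bb: "b \<noteq> b'" and pb2: "2 \<le> pt b"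
    and os2: "orb_stratum (insert a' A) (insert_before pt a' b) (insert_before pb a' b') (m11 # m12 # ms)"
    using main_ext[OF P d1 assms(8) os assms(5,6,7)] by blast
  let ?pt2 = "insert_before pt a' b" and ?pb2 = "insert_before pb a' b'"
  have P2: "is_perm (insert a' A) ?pt2 ?pb2" by (rule P2[OF P d1 assms(8) b b' bb])
  have cA2: "card (insert a' A) = card A + 1" by (rule cA2[OF P d1 assms(8) b b' bb])
  have d12: "1 \<le> card (insert a' A)" using cA2 by simp
  have n1: "\<not> (pt b = 1 \<and> pb b' = 1)" using pb2 by simp
  have se: "simple_extension A pt pb a' ?pt2 ?pb2"
    unfolding simple_extension_def
  proof (intro conjI)
    show "a' \<notin> A" by (rule assms(8))
    show "\<exists>b0\<in>A. \<exists>b0'\<in>A. \<not> (pt b0 = 1 \<and> pb b0' = 1) \<and>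
        (\<forall>x\<in>insert a' A. ?pt2 x = insert_before pt a' b0 x \<and> ?pb2 x = insert_before pb a' b0' x)"
      using b b' n1 by blast
  qed
  have ca: "c \<noteq> a'" using c(1) assms(8) by auto
  have "?pt2 c = rr (pt b) (pt c)" by (rule ib_old[OF ca])
  also have "rr (pt b) (pt c) = 1" unfolding c(2) rr_def using pb2 by simp
  finally have ptc: "?pt2 c = 1" .
  have "?pb2 c = rr (pb b') (pb c)" by (rule ib_old[OF ca])
  also have "rr (pb b') (pb c) = card A + 1" unfolding c(3) rr_def using pb_range[OF P b'] by simp
  finally have pbc: "?pb2 c = card A + 1" .
  have irr: "irreducible_perm (insert a' A) ?pt2 ?pb2"
    unfolding irreducible_perm_def
  proof (intro conjI allI impI)
    show "is_perm (insert a' A) ?pt2 ?pb2" by (rule P2)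
    fix j assume j: "1 \<le> j \<and> j < card (insert a' A)"
    have "c \<in> {a \<in> insert a' A. ?pt2 a \<le> j}" using c(1) ptc j by simp
    moreover have "c \<notin> {a \<in> insert a' A. ?pb2 a \<le> j}" using pbc j cA2 by simp
    ultimately show "{a \<in> insert a' A. ?pt2 a \<le> j} \<noteq> {a \<in> insert a' A. ?pb2 a \<le> j}" by blast
  qed
  have st: "in_stratum (insert a' A) ?pt2 ?pb2 (m11 # m12 # ms)"
    using stratum_iff[OF P2 d12] os2 by simp
  show ?thesis using se irr st by blast
qed


end
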